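(* Let $A=\bigoplus_{i\in\mathbb{Z}}A_i$ be a pre-CP ring, and let $\psi:A_{-1}\otimes_{A_0}A_1\to A_0$ be given by $\psi(a\otimes b)=ab$. Then $(A_{-1},A_1,\psi)$ is an s-unital $A_0$-system satisfying Condition (FS), its Cuntz–Pimsner ring $\mathcal{O}_{(A_{-1},A_1,\psi)}$ is well-defined, the tuple $(i_{A_{-1}},i_{A_1},i_{A_0},A)$ of inclusion maps is a surjective covariant representation, and $$(i_{A_{-1}},i_{A_1},i_{A_0},A)\cong_r(\iota^{CP}_{A_{-1}},\iota^{CP}_{A_1},\iota^{CP}_{A_0},\mathcal{O}_{(A_{-1},A_1,\psi)}).$$ In particular $A\cong_{\mathrm{gr}}\mathcal{O}_{(A_{-1},A_1,\psi)}$, and this covariant representation is semi-full.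
   Context: Rings are associative, not necessarily unital. For additive subsets $X,Y$ of a ring, $XY$ is the additive subgroup generated by products, and $X^n$ similarly. A bimodule ${}_AM_B$ is s-unital if for each $x\in M$ there are $a\in A,b\in B$ with $ax=x=xb$; a ring is s-unital if it is s-unital as a bimodule over itself. A $\mathbb{Z}$-graded ring $A$ is nearly epsilon-strongly graded if each $A_i$ is an s-unital $A_iA_{-i}$-$A_{-i}A_i$-bimodule; semi-saturated if $A_n=(A_1)^n$, $A_{-n}=(A_{-1})^n$ for $n>0$. $\mathrm{Ann}_{A_0}(A_1)=\{r\in A_0:rA_1=0\}$ and for an ideal $J$ of $A_0$, $J^\perp=\{r\in A_0:rx=xr=0\ \forall x\in J\}$. $A$ is pre-CP if it is semi-saturated, nearly epsilon-strongly graded and $\mathrm{Ann}_{A_0}(A_1)\cap\mathrm{Ann}_{A_0}(A_1)^\perp=\{0\}$. An $R$-system is a triple $(P,Q,\psi)$ with $P,Q$ $R$-bimodules and $\psi:P\otimes_RQ\to R$ an $R$-bimodule homomorphism; it is s-unital if $R$ is s-unital and $P,Q$ are s-unital $R$-$R$-bimodules. Put $P^{\otimes0}=Q^{\otimes0}=R$, $\psi_0(r\otimes r')=rr'$, $\psi_1=\psi$, $Q^{\otimes n}=Q^{\otimes(n-1)}\otimes_RQ$, $P^{\otimes n}=P\otimes_RP^{\otimes(n-1)}$, $\psi_n((p_1\otimes p_2)\otimes(q_2\otimes q_1))=\psi(p_1\psi_{n-1}(p_2\otimes q_2)\otimes q_1)$. A covariant representation is a tuple $(S,T,\sigma,B)$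 with $B$ a ring, $S:P\to B$, $T:Q\to B$ additive, $\sigma:R\to B$ a ring homomorphism, with $S(pr)=S(p)\sigma(r)$, $S(rp)=\sigma(r)S(p)$, $T(qr)=T(q)\sigma(r)$, $T(rq)=\sigma(r)T(q)$, $\sigma(\psi(p\otimes q))=S(p)T(q)$. It is surjective if $B$ is generated as a ring by $\sigma(R)\cup S(P)\cup T(Q)$, graded if moreover $B$ is $\mathbb{Z}$-graded with $\sigma(R)\subseteq B_0$, $T(Q)\subseteq B_1$, $S(P)\subseteq B_{-1}$. For graded ones, $I^{(k)}_{\psi,\sigma}$ is the ideal of $B_0$ generated by $\{\sigma(\psi_k(p\otimes q)):p\in P^{\otimes k},q\in Q^{\otimes k}\}$, and the representation is semi-full if $B_{-k}B_k=I^{(k)}_{\psi,\sigma}$ for all $k\ge0$. A morphism $(S,T,\sigma,B)\to(S',T',\sigma',B')$ is a ring homomorphism $\phi:B\to B'$ with $\phi S=S'$, $\phi T=T'$, $\phi\sigma=\sigma'$; $\cong_r$ is isomorphism in this category. $\theta_{q,p}(x)=q\psi(p\otimes x)$ on $Q$, $\theta_{p,q}(y)=\psi(y\otimes q)p$ on $P$; $\mathcal{F}_P(Q)$, $\mathcal{F}_Q(P)$ are the additive groups they generate. Condition (FS): for all finite sets $\{q_i\}\subseteq Q$, $\{p_j\}\subseteq P$ there are $\Theta\in\mathcal{F}_P(Q)$, $\Phi\in\mathcal{F}_Q(P)$ fixing each $q_i$, resp. $p_j$. $\Delta(r)(q)=rq$. Under (FS), each covariant representation gives a unique ring homomorphism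 $\pi_{T,S}:\mathcal{F}_P(Q)\to B$ with $\theta_{q,p}\mapsto T(q)S(p)$. The Toeplitz representation $(\iota_P,\iota_Q,\iota_R,\mathcal{T}_{(P,Q,\psi)})$ is the universal covariant representation, graded with $\mathcal{T}_i$ generated additively by $\iota_Q^m(q)\iota_P^n(p)$ and $\iota_R(r)\iota_Q^m(q)\iota_P^n(p)$, $q\in Q^{\otimes m},p\in P^{\otimes n}$, $m-n=i$. An ideal $J\subseteq R$ is $\psi$-compatible if $\Delta(J)\subseteq\mathcal{F}_P(Q)$ and faithful if $J\cap\ker\Delta=0$; $\mathcal{T}(J)$ is the ideal generated by $\iota_R(x)-\pi_{\iota_Q,\iota_P}(\Delta(x))$, $x\in J$, and $\mathcal{O}(J)=\mathcal{T}/\mathcal{T}(J)$ with quotient map $\rho$, quotient grading, and representation $(\rho\iota_P,\rho\iota_Q,\rho\iota_R,\mathcal{O}(J))$. If a unique maximal $\psi$-compatible faithful ideal $J$ exists, the Cuntz–Pimsner ring $\mathcal{O}_{(P,Q,\psi)}=\mathcal{O}(J)$ is well-defined, with Cuntz–Pimsner representation $(\iota^{CP}_P,\iota^{CP}_Q,\iota^{CP}_R,\mathcal{O}_{(P,Q,\psi)})$ the corresponding relative representation. *)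

theory Defs
  imports Main
begin

(* Rings are (not necessarily unital) rings given as whole types of class ring;
   sub-structures (graded components, R, P, Q) are subsets of such a type. *)

inductive_set add_span :: "'a::ring set \<Rightarrow> 'a set" for X where
  base: "x \<in> X \<Longrightarrow> x \<in> add_span X"
| zero: "0 \<in> add_span X"
| add: "x \<in> add_span X \<Longrightarrow> y \<in> add_span X \<Longrightarrow> x + y \<in> add_span X"
| neg: "x \<in> add_span X \<Longrightarrow> - x \<in> add_span X"

definition setprod :: "'a::ring set \<Rightarrow> 'a set \<Rightarrow> 'a set" where
  "setprod X Y = add_span {x * y | x y. x \<in> X \<and> y \<in> Y}"

fun setpow :: "'a::ring set \<Rightarrow> nat \<Rightarrow> 'a set" where
  "setpow X 0 = add_span {}"
| "setpow X (Suc 0) = X"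
| "setpow X (Suc (Suc n)) = setprod X (setpow X (Suc n))"

definition add_subgroup :: "'a::ring set \<Rightarrow> bool" where
  "add_subgroup S \<longleftrightarrow> 0 \<in> S \<and> (\<forall>x\<in>S. \<forall>y\<in>S. x + y \<in> S) \<and> (\<forall>x\<in>S. - x \<in> S)"

definition Z_graded :: "(int \<Rightarrow> 'a::ring set) \<Rightarrow> bool" where
  "Z_graded G \<longleftrightarrow> (\<forall>i. add_subgroup (G i))
     \<and> (\<forall>i j. \<forall>x\<in>G i. \<forall>y\<in>G j. x * y \<in> G (i + j))
     \<and> (\<forall>x. \<exists>!f. finite {i. f i \<noteq> 0} \<and> (\<forall>i. f i \<in> G i) \<and> x = (\<Sum>i\<in>{i. f i \<noteq> 0}. f i))"

definition s_unital_bimod :: "'a::ring set \<Rightarrow> 'a set \<Rightarrow> 'a set \<Rightarrow> bool" where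
  "s_unital_bimod L M Rr \<longleftrightarrow> (\<forall>x\<in>M. (\<exists>a\<in>L. a * x = x) \<and> (\<exists>b\<in>Rr. x * b = x))"

definition nearly_eps_strongly_graded :: "(int \<Rightarrow> 'a::ring set) \<Rightarrow> bool" where
  "nearly_eps_strongly_graded G \<longleftrightarrow>
     (\<forall>i. s_unital_bimod (setprod (G i) (G (-i))) (G i) (setprod (G (-i)) (G i)))"

definition semi_saturated :: "(int \<Rightarrow> 'a::ring set) \<Rightarrow> bool" where
  "semi_saturated G \<longleftrightarrow> (\<forall>n::nat. n > 0 \<longrightarrow>
      G (int n) = setpow (G 1) n \<and> G (- int n) = setpow (G (-1)) n)"

definition ann0 :: "(int \<Rightarrow> 'a::ring set) \<Rightarrow> 'a set" where
  "ann0 G = {r \<in> G 0. \<forall>x\<in>G 1. r * x = 0}"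

definition perp :: "'a::ring set \<Rightarrow> 'a set \<Rightarrow> 'a set" where
  "perp R J = {r \<in> R. \<forall>x\<in>J. r * x = 0 \<and> x * r = 0}"

definition pre_CP :: "(int \<Rightarrow> 'a::ring set) \<Rightarrow> bool" where
  "pre_CP G \<longleftrightarrow> Z_graded G \<and> semi_saturated G \<and> nearly_eps_strongly_graded G
     \<and> ann0 G \<inter> perp (G 0) (ann0 G) = {0}"

definition subring :: "'a::ring set \<Rightarrow> bool" where
  "subring R \<longleftrightarrow> add_subgroup R \<and> (\<forall>x\<in>R. \<forall>y\<in>R. x * y \<in> R)"

definition is_ideal :: "'a::ring set \<Rightarrow> 'a set \<Rightarrow> bool" where
  "is_ideal S J \<longleftrightarrow> J \<subseteq> S \<and> add_subgroup J \<and> (\<forall>s\<in>S. \<forall>x\<in>J. s * x \<in> J \<and> x * s \<in> J)"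

definition bimodule :: "'a::ring set \<Rightarrow> 'a set \<Rightarrow> bool" where
  "bimodule R M \<longleftrightarrow> add_subgroup M \<and> (\<forall>r\<in>R. \<forall>m\<in>M. r * m \<in> M \<and> m * r \<in> M)"

(* psi : P \<otimes>_R Q \<rightarrow> R an R-bimodule map, given by its values on elementary tensors,
   i.e. as an R-balanced biadditive map compatible with the outer actions *)
definition R_system :: "'a::ring set \<Rightarrow> 'a set \<Rightarrow> 'a set \<Rightarrow> ('a \<Rightarrow> 'a \<Rightarrow> 'a) \<Rightarrow> bool" where
  "R_system R P Q \<psi> \<longleftrightarrow> subring R \<and> bimodule R P \<and> bimodule R Q
     \<and> (\<forall>p\<in>P. \<forall>q\<in>Q. \<psi> p q \<in> R)
     \<and> (\<forall>p\<in>P. \<forall>p'\<in>P. \<forall>q\<in>Q. \<psi> (p + p') q = \<psi> p q + \<psi> p' q)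
     \<and> (\<forall>p\<in>P. \<forall>q\<in>Q. \<forall>q'\<in>Q. \<psi> p (q + q') = \<psi> p q + \<psi> p q')
     \<and> (\<forall>p\<in>P. \<forall>q\<in>Q. \<forall>r\<in>R. \<psi> (p * r) q = \<psi> p (r * q)
            \<and> \<psi> (r * p) q = r * \<psi> p q \<and> \<psi> p (q * r) = \<psi> p q * r)"

definition s_unital_system :: "'a::ring set \<Rightarrow> 'a set \<Rightarrow> 'a set \<Rightarrow> ('a \<Rightarrow> 'a \<Rightarrow> 'a) \<Rightarrow> bool" where
  "s_unital_system R P Q \<psi> \<longleftrightarrow> R_system R P Q \<psi> \<and> s_unital_bimod R R R
     \<and> s_unital_bimod R P R \<and> s_unital_bimod R Q R"

(* psi_n on elementary tensors: ps = [p1,...,pn] represents p1\<otimes>...\<otimes>pn \<in> P^{\<otimes>n},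
   qs = [q1,...,qn] represents qn\<otimes>...\<otimes>q1 \<in> Q^{\<otimes>n};
   psi_n((p1\<otimes>p')\<otimes>(q'\<otimes>q1)) = psi(p1 psi_{n-1}(p'\<otimes>q') \<otimes> q1) *)
fun psi_list :: "('a::ring \<Rightarrow> 'a \<Rightarrow> 'a) \<Rightarrow> 'a list \<Rightarrow> 'a list \<Rightarrow> 'a" where
  "psi_list \<psi> [p] [q] = \<psi> p q"
| "psi_list \<psi> (p # p' # ps) (q # q' # qs) = \<psi> (p * psi_list \<psi> (p' # ps) (q' # qs)) q"
| "psi_list \<psi> _ _ = 0"

(* values of psi_k on elementary tensors (these additively generate the image of psi_k) *)
definition psi_vals :: "'a::ring set \<Rightarrow> 'a set \<Rightarrow> 'a set \<Rightarrow> ('a \<Rightarrow> 'a \<Rightarrow> 'a) \<Rightarrow> nat \<Rightarrow> 'a set" where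
  "psi_vals R P Q \<psi> k = (if k = 0 then {r * r' | r r'. r \<in> R \<and> r' \<in> R}
     else {psi_list \<psi> ps qs | ps qs. length ps = k \<and> length qs = k \<and> set ps \<subseteq> P \<and> set qs \<subseteq> Q})"

definition ring_hom :: "('a::ring \<Rightarrow> 'b::ring) \<Rightarrow> bool" where
  "ring_hom \<phi> \<longleftrightarrow> (\<forall>x y. \<phi> (x + y) = \<phi> x + \<phi> y \<and> \<phi> (x * y) = \<phi> x * \<phi> y)"

(* covariant representation (S,T,sigma,B), B being the whole type 'b *)
definition cov_rep :: "'a::ring set \<Rightarrow> 'a set \<Rightarrow> 'a set \<Rightarrow> ('a \<Rightarrow> 'a \<Rightarrow> 'a)
    \<Rightarrow> ('a \<Rightarrow> 'b::ring) \<Rightarrow> ('a \<Rightarrow> 'b) \<Rightarrow> ('a \<Rightarrow> 'b) \<Rightarrow> bool" where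
  "cov_rep R P Q \<psi> S T \<sigma> \<longleftrightarrow>
     (\<forall>r\<in>R. \<forall>r'\<in>R. \<sigma> (r + r') = \<sigma> r + \<sigma> r' \<and> \<sigma> (r * r') = \<sigma> r * \<sigma> r')
   \<and> (\<forall>p\<in>P. \<forall>p'\<in>P. S (p + p') = S p + S p')
   \<and> (\<forall>q\<in>Q. \<forall>q'\<in>Q. T (q + q') = T q + T q')
   \<and> (\<forall>p\<in>P. \<forall>r\<in>R. S (p * r) = S p * \<sigma> r \<and> S (r * p) = \<sigma> r * S p)
   \<and> (\<forall>q\<in>Q. \<forall>r\<in>R. T (q * r) = T q * \<sigma> r \<and> T (r * q) = \<sigma> r * T q)
   \<and> (\<forall>p\<in>P. \<forall>q\<in>Q. \<sigma> (\<psi> p q) = S p * T q)"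

inductive_set gen_subring :: "'a::ring set \<Rightarrow> 'a set" for X where
  base: "x \<in> X \<Longrightarrow> x \<in> gen_subring X"
| zero: "0 \<in> gen_subring X"
| add: "x \<in> gen_subring X \<Longrightarrow> y \<in> gen_subring X \<Longrightarrow> x + y \<in> gen_subring X"
| neg: "x \<in> gen_subring X \<Longrightarrow> - x \<in> gen_subring X"
| mult: "x \<in> gen_subring X \<Longrightarrow> y \<in> gen_subring X \<Longrightarrow> x * y \<in> gen_subring X"

inductive_set gen_ideal :: "'a::ring set \<Rightarrow> 'a set \<Rightarrow> 'a set" for S X where
  base: "x \<in> X \<Longrightarrow> x \<in> gen_ideal S X"
| zero: "0 \<in> gen_ideal S X"
| add: "x \<in> gen_ideal S X \<Longrightarrow> y \<in> gen_ideal S X \<Longrightarrow> x + y \<in> gen_ideal S X"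
| neg: "x \<in> gen_ideal S X \<Longrightarrow> - x \<in> gen_ideal S X"
| lmult: "s \<in> S \<Longrightarrow> x \<in> gen_ideal S X \<Longrightarrow> s * x \<in> gen_ideal S X"
| rmult: "s \<in> S \<Longrightarrow> x \<in> gen_ideal S X \<Longrightarrow> x * s \<in> gen_ideal S X"

definition surj_cov_rep where
  "surj_cov_rep R P Q \<psi> S T \<sigma> \<longleftrightarrow> cov_rep R P Q \<psi> S T \<sigma>
     \<and> gen_subring (\<sigma> ` R \<union> S ` P \<union> T ` Q) = UNIV"

definition graded_cov_rep where
  "graded_cov_rep R P Q \<psi> S T \<sigma> H \<longleftrightarrow> surj_cov_rep R P Q \<psi> S T \<sigma> \<and> Z_graded H
     \<and> \<sigma> ` R \<subseteq> H 0 \<and> T ` Q \<subseteq> H 1 \<and> S ` P \<subseteq> H (-1)"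

definition I_ideal where
  "I_ideal R P Q \<psi> \<sigma> H k = gen_ideal (H 0) (\<sigma> ` psi_vals R P Q \<psi> k)"

definition semi_full where
  "semi_full R P Q \<psi> S T \<sigma> H \<longleftrightarrow> graded_cov_rep R P Q \<psi> S T \<sigma> H
     \<and> (\<forall>k::nat. setprod (H (- int k)) (H (int k)) = I_ideal R P Q \<psi> \<sigma> H k)"

definition rep_morph :: "'a::ring set \<Rightarrow> 'a set \<Rightarrow> 'a set
    \<Rightarrow> ('a \<Rightarrow> 'b::ring) \<Rightarrow> ('a \<Rightarrow> 'b) \<Rightarrow> ('a \<Rightarrow> 'b)
    \<Rightarrow> ('a \<Rightarrow> 'c::ring) \<Rightarrow> ('a \<Rightarrow> 'c) \<Rightarrow> ('a \<Rightarrow> 'c) \<Rightarrow> ('b \<Rightarrow> 'c) \<Rightarrow> bool" where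
  "rep_morph R P Q S T \<sigma> S' T' \<sigma>' \<phi> \<longleftrightarrow> ring_hom \<phi>
     \<and> (\<forall>p\<in>P. \<phi> (S p) = S' p) \<and> (\<forall>q\<in>Q. \<phi> (T q) = T' q) \<and> (\<forall>r\<in>R. \<phi> (\<sigma> r) = \<sigma>' r)"

definition rep_iso where
  "rep_iso R P Q S T \<sigma> S' T' \<sigma>' \<longleftrightarrow> (\<exists>\<phi>. rep_morph R P Q S T \<sigma> S' T' \<sigma>' \<phi> \<and> bij \<phi>)"

definition graded_iso :: "(int \<Rightarrow> 'b::ring set) \<Rightarrow> (int \<Rightarrow> 'c::ring set) \<Rightarrow> bool" where
  "graded_iso H K \<longleftrightarrow> (\<exists>\<phi>. ring_hom \<phi> \<and> bij \<phi> \<and> (\<forall>i. \<phi> ` H i = K i))"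

fun nprod :: "'a::ring list \<Rightarrow> 'a" where
  "nprod [] = 0"
| "nprod [x] = x"
| "nprod (x # y # xs) = x * nprod (y # xs)"

(* iota_Q^m(Q^{\<otimes>m}) on elementary tensors, with Q^{\<otimes>0} = R *)
definition tmon :: "('a \<Rightarrow> 'b::ring) \<Rightarrow> ('a \<Rightarrow> 'b) \<Rightarrow> 'a set \<Rightarrow> 'a set \<Rightarrow> nat \<Rightarrow> 'b set" where
  "tmon iR iX R X m = (if m = 0 then iR ` R
     else {nprod (map iX xs) | xs. length xs = m \<and> set xs \<subseteq> X})"

definition toeplitz_grading where
  "toeplitz_grading R P Q iP iQ iR i = add_span
     ({x * y | x y m n. x \<in> tmon iR iQ R Q m \<and> y \<in> tmon iR iP R P n \<and> int m - int n = i}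
    \<union> {iR r * x * y | r x y m n. r \<in> R \<and> x \<in> tmon iR iQ R Q m \<and> y \<in> tmon iR iP R P n
          \<and> int m - int n = i})"

(* universality of (iP,iQ,iR) with respect to covariant representations in rings of type 'd *)
definition universal_for :: "'a::ring set \<Rightarrow> 'a set \<Rightarrow> 'a set \<Rightarrow> ('a \<Rightarrow> 'a \<Rightarrow> 'a)
    \<Rightarrow> ('a \<Rightarrow> 'b::ring) \<Rightarrow> ('a \<Rightarrow> 'b) \<Rightarrow> ('a \<Rightarrow> 'b) \<Rightarrow> 'd::ring itself \<Rightarrow> bool" where
  "universal_for R P Q \<psi> iP iQ iR (_ :: 'd itself) \<longleftrightarrow>
     (\<forall>(S :: 'a \<Rightarrow> 'd) T \<sigma>. cov_rep R P Q \<psi> S T \<sigma> \<longrightarrow>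
        (\<exists>!\<phi>. rep_morph R P Q iP iQ iR S T \<sigma> \<phi>))"

definition toeplitz_rep where
  "toeplitz_rep R P Q \<psi> iP iQ iR \<longleftrightarrow>
     graded_cov_rep R P Q \<psi> iP iQ iR (toeplitz_grading R P Q iP iQ iR)"

(* f restricted to Q lies in F_P(Q) *)
definition in_FPQ :: "('a::ring \<Rightarrow> 'a \<Rightarrow> 'a) \<Rightarrow> 'a set \<Rightarrow> 'a set \<Rightarrow> ('a \<Rightarrow> 'a) \<Rightarrow> bool" where
  "in_FPQ \<psi> P Q f \<longleftrightarrow> (\<exists>l. set l \<subseteq> Q \<times> P \<and> (\<forall>y\<in>Q. f y = (\<Sum>(q,p)\<leftarrow>l. q * \<psi> p y)))"

(* g restricted to P lies in F_Q(P) *)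
definition in_FQP :: "('a::ring \<Rightarrow> 'a \<Rightarrow> 'a) \<Rightarrow> 'a set \<Rightarrow> 'a set \<Rightarrow> ('a \<Rightarrow> 'a) \<Rightarrow> bool" where
  "in_FQP \<psi> P Q g \<longleftrightarrow> (\<exists>l. set l \<subseteq> P \<times> Q \<and> (\<forall>y\<in>P. g y = (\<Sum>(p,q)\<leftarrow>l. \<psi> y q * p)))"

definition condition_FS where
  "condition_FS P Q \<psi> \<longleftrightarrow> (\<forall>Qs Ps. finite Qs \<and> Qs \<subseteq> Q \<and> finite Ps \<and> Ps \<subseteq> P \<longrightarrow>
      (\<exists>\<Theta>. in_FPQ \<psi> P Q \<Theta> \<and> (\<forall>q\<in>Qs. \<Theta> q = q))
    \<and> (\<exists>\<Phi>. in_FQP \<psi> P Q \<Phi> \<and> (\<forall>p\<in>Ps. \<Phi> p = p)))"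

definition psi_compatible where
  "psi_compatible R P Q \<psi> J \<longleftrightarrow> is_ideal R J \<and> (\<forall>x\<in>J. in_FPQ \<psi> P Q (\<lambda>y. x * y))"

definition faithful_ideal where
  "faithful_ideal Q J \<longleftrightarrow> (\<forall>x\<in>J. (\<forall>y\<in>Q. x * y = 0) \<longrightarrow> x = 0)"

definition maximal_cf_ideal where
  "maximal_cf_ideal R P Q \<psi> J \<longleftrightarrow> psi_compatible R P Q \<psi> J \<and> faithful_ideal Q J
     \<and> (\<forall>J'. psi_compatible R P Q \<psi> J' \<and> faithful_ideal Q J' \<and> J \<subseteq> J' \<longrightarrow> J' = J)"

definition CP_well_defined where
  "CP_well_defined R P Q \<psi> \<longleftrightarrow> (\<exists>!J. maximal_cf_ideal R P Q \<psi> J)"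

definition CP_ideal where
  "CP_ideal R P Q \<psi> = (THE J. maximal_cf_ideal R P Q \<psi> J)"

(* T(J): ideal generated by iota_R(x) - pi(Delta(x)), x \<in> J, where pi(sum theta_{q,p}) = sum iota_Q q iota_P p *)
definition toeplitz_ideal where
  "toeplitz_ideal R P Q \<psi> iP iQ iR J = gen_ideal UNIV
     {iR x - (\<Sum>(q,p)\<leftarrow>l. iQ q * iP p) | x l. x \<in> J \<and> set l \<subseteq> Q \<times> P
        \<and> (\<forall>y\<in>Q. x * y = (\<Sum>(q,p)\<leftarrow>l. q * \<psi> p y))}"

end

theory Submission
  imports Defs
begin

lemma add_span_sub:
  assumes "add_subgroup S" "X \<subseteq> S"
  shows "add_span X \<subseteq> S"
proof
  fix x assume "x \<in> add_span X"
  then show "x \<in> S"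
    by induction (use assms in \<open>auto simp: add_subgroup_def\<close>)
qed

lemma add_span_mono: "X \<subseteq> Y \<Longrightarrow> add_span X \<subseteq> add_span Y"
proof
  fix x assume XY: "X \<subseteq> Y" and x: "x \<in> add_span X"
  from x show "x \<in> add_span Y"
    by (induction rule: add_span.induct) (use XY in \<open>auto intro: add_span.intros\<close>)
qed

lemma add_subgroup_add_span: "add_subgroup (add_span X)"
  by (auto simp: add_subgroup_def intro: add_span.intros)

lemma add_span_diff: "x \<in> add_span X \<Longrightarrow> y \<in> add_span X \<Longrightarrow> x - y \<in> add_span X"
  by (metis add_span.add add_span.neg diff_conv_add_uminus)

lemma add_subgroup_diff: "add_subgroup S \<Longrightarrow> x \<in> S \<Longrightarrow> y \<in> S \<Longrightarrow> x - y \<in> S"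
  by (metis add_subgroup_def diff_conv_add_uminus)

lemma add_subgroup_sum_list:
  assumes "add_subgroup S" "\<And>x. x \<in> set xs \<Longrightarrow> f x \<in> S"
  shows "(\<Sum>x\<leftarrow>xs. f x) \<in> S"
  using assms(2) by (induction xs) (use assms(1) in \<open>auto simp: add_subgroup_def\<close>)

lemma add_subgroup_sum:
  assumes "add_subgroup S" "\<And>x. x \<in> A \<Longrightarrow> f x \<in> S"
  shows "sum f A \<in> S"
proof (cases "finite A")
  case True
  then show ?thesis using assms(2)
    by (induction A rule: finite_induct) (use assms(1) in \<open>auto simp: add_subgroup_def\<close>)
next
  case False
  then show ?thesis using assms(1) by (simp add: add_subgroup_def)
qed

lemma add_span_base_set: "X \<subseteq> add_span X"
  by (auto intro: add_span.base)

lemma add_span_idem_sub: "add_subgroup S \<Longrightarrow> add_span S = S"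
  using add_span_sub[of S S] add_span_base_set[of S] by auto

lemma setprod_list:
  assumes "x \<in> setprod X Y" and negX: "\<And>a. a \<in> X \<Longrightarrow> - a \<in> X"
  shows "\<exists>l. set l \<subseteq> X \<times> Y \<and> x = (\<Sum>(a,b)\<leftarrow>l. a * b)"
proof -
  have "x \<in> add_span {x * y | x y. x \<in> X \<and> y \<in> Y}" using assms(1) by (simp add: setprod_def)
  then show ?thesis
  proof induction
    case (base x)
    then obtain a b where "x = a * b" "a \<in> X" "b \<in> Y" by auto
    then show ?case by (intro exI[of _ "[(a,b)]"]) auto
  next
    case zero
    then show ?case by (intro exI[of _ "[]"]) auto
  next
    case (add x y)
    then obtain l1 l2 where "set l1 \<subseteq> X \<times> Y" "x = (\<Sum>(a,b)\<leftarrow>l1. a * b)"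
      "set l2 \<subseteq> X \<times> Y" "y = (\<Sum>(a,b)\<leftarrow>l2. a * b)" by blast
    then show ?case by (intro exI[of _ "l1 @ l2"]) auto
  next
    case (neg x)
    then obtain l1 where l1: "set l1 \<subseteq> X \<times> Y" "x = (\<Sum>(a,b)\<leftarrow>l1. a * b)" by blast
    have "- x = (\<Sum>(a,b)\<leftarrow>map (\<lambda>(a,b). (-a,b)) l1. a * b)"
      unfolding l1(2) by (induction l1) auto
    moreover have "set (map (\<lambda>(a,b). (-a,b)) l1) \<subseteq> X \<times> Y" using l1(1) negX by auto
    ultimately show ?case by blast
  qed
qed

lemma list_in_setprod:
  assumes "set l \<subseteq> X \<times> Y"
  shows "(\<Sum>(a,b)\<leftarrow>l. a * b) \<in> setprod X Y"
  using assms
proof (induction l)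
  case Nil
  then show ?case by (simp add: setprod_def add_span.zero)
next
  case (Cons ab l)
  obtain a b where ab: "ab = (a,b)" by force
  have "a * b \<in> setprod X Y" using Cons.prems ab by (auto simp: setprod_def intro: add_span.base)
  then show ?case using Cons ab by (auto simp: setprod_def intro: add_span.add)
qed

lemma sum_list_pair_mult_right:
  "(\<Sum>(a,b)\<leftarrow>l. a * b) * (y::'a::ring) = (\<Sum>(a,b)\<leftarrow>l. a * (b * y))"
  by (induction l) (auto simp: distrib_right mult.assoc split: prod.splits)

lemma sum_list_pair_mult_left:
  "(y::'a::ring) * (\<Sum>(a,b)\<leftarrow>l. a * b) = (\<Sum>(a,b)\<leftarrow>l. (y * a) * b)"
  by (induction l) (auto simp: distrib_left mult.assoc split: prod.splits)

lemma ring_hom_zero: "ring_hom f \<Longrightarrow> f 0 = 0"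
  unfolding ring_hom_def by (metis add_cancel_left_right add_0)

lemma ring_hom_neg: "ring_hom f \<Longrightarrow> f (- x) = - f x"
  unfolding ring_hom_def by (metis add.right_inverse add_eq_0_iff ring_hom_def ring_hom_zero)

lemma ring_hom_diff: "ring_hom f \<Longrightarrow> f (x - y) = f x - f y"
  by (metis diff_conv_add_uminus ring_hom_def ring_hom_neg)

lemma ring_hom_add: "ring_hom f \<Longrightarrow> f (x + y) = f x + f y"
  by (simp add: ring_hom_def)

lemma ring_hom_mult: "ring_hom f \<Longrightarrow> f (x * y) = f x * f y"
  by (simp add: ring_hom_def)

lemma ring_hom_sum_list: "ring_hom f \<Longrightarrow> f (\<Sum>x\<leftarrow>xs. g x) = (\<Sum>x\<leftarrow>xs. f (g x))"
  by (induction xs) (auto simp: ring_hom_zero ring_hom_add)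

lemma ring_hom_sum: "ring_hom f \<Longrightarrow> f (sum g A) = sum (\<lambda>x. f (g x)) A"
  by (induction A rule: infinite_finite_induct) (auto simp: ring_hom_zero ring_hom_add)

locale cpsetup =
  fixes G :: "int \<Rightarrow> 'a::ring set"
    and iP iQ iR :: "'a \<Rightarrow> 'b::ring"
    and \<rho> :: "'b \<Rightarrow> 'c::ring"
  assumes preCP: "pre_CP G"
    and toep: "toeplitz_rep (G 0) (G (-1)) (G 1) (\<lambda>a b. a * b) iP iQ iR"
    and univ_a: "universal_for (G 0) (G (-1)) (G 1) (\<lambda>a b. a * b) iP iQ iR TYPE('a)"
    and rho_hom: "ring_hom \<rho>" and rho_surj: "surj \<rho>"
    and rho_ker: "{x. \<rho> x = 0} = toeplitz_ideal (G 0) (G (-1)) (G 1) (\<lambda>a b. a * b) iP iQ iR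
                                   (CP_ideal (G 0) (G (-1)) (G 1) (\<lambda>a b. a * b))"
begin

abbreviation "R \<equiv> G 0"
abbreviation "P \<equiv> G (-1)"
abbreviation "Q \<equiv> G 1"

lemma ZG: "Z_graded G" using preCP by (simp add: pre_CP_def)

lemma sg: "add_subgroup (G i)" using ZG by (simp add: Z_graded_def)

lemma mulG: "x \<in> G i \<Longrightarrow> y \<in> G j \<Longrightarrow> x * y \<in> G (i + j)"
  using ZG by (simp add: Z_graded_def)

lemma zeroG: "0 \<in> G i" using sg by (simp add: add_subgroup_def)
lemma addG: "x \<in> G i \<Longrightarrow> y \<in> G i \<Longrightarrow> x + y \<in> G i" using sg by (simp add: add_subgroup_def)
lemma negG: "x \<in> G i \<Longrightarrow> - x \<in> G i" using sg by (simp add: add_subgroup_def)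
lemma diffG: "x \<in> G i \<Longrightarrow> y \<in> G i \<Longrightarrow> x - y \<in> G i" using sg add_subgroup_diff by blast

lemma RR: "x \<in> R \<Longrightarrow> y \<in> R \<Longrightarrow> x * y \<in> R" using mulG[of x 0 y 0] by simp
lemma QP: "x \<in> Q \<Longrightarrow> y \<in> P \<Longrightarrow> x * y \<in> R" using mulG[of x 1 y "-1"] by simp
lemma PQ: "x \<in> P \<Longrightarrow> y \<in> Q \<Longrightarrow> x * y \<in> R" using mulG[of x "-1" y 1] by simp
lemma RQ: "x \<in> R \<Longrightarrow> y \<in> Q \<Longrightarrow> x * y \<in> Q" using mulG[of x 0 y 1] by simp
lemma QR: "x \<in> Q \<Longrightarrow> y \<in> R \<Longrightarrow> x * y \<in> Q" using mulG[of x 1 y 0] by simp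
lemma RP: "x \<in> R \<Longrightarrow> y \<in> P \<Longrightarrow> x * y \<in> P" using mulG[of x 0 y "-1"] by simp
lemma PR: "x \<in> P \<Longrightarrow> y \<in> R \<Longrightarrow> x * y \<in> P" using mulG[of x "-1" y 0] by simp

lemma setprod_sub_G:
  assumes "\<And>x y. x \<in> X \<Longrightarrow> y \<in> Y \<Longrightarrow> x * y \<in> G i"
  shows "setprod X Y \<subseteq> G i"
  unfolding setprod_def using assms by (intro add_span_sub[OF sg]) auto

lemma QP_R: "setprod Q P \<subseteq> R" by (rule setprod_sub_G) (rule QP)
lemma PQ_R: "setprod P Q \<subseteq> R" by (rule setprod_sub_G) (rule PQ)
lemma RR_R: "setprod R R \<subseteq> R" by (rule setprod_sub_G) (rule RR)

lemma NE: "nearly_eps_strongly_graded G" using preCP by (simp add: pre_CP_def)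

lemma unitQ:
  assumes "q \<in> Q"
  shows "\<exists>e\<in>setprod Q P. e * q = q" "\<exists>b\<in>setprod P Q. q * b = q"
  using NE assms unfolding nearly_eps_strongly_graded_def s_unital_bimod_def
  by (metis minus_minus)+

lemma unitP:
  assumes "p \<in> P"
  shows "\<exists>e\<in>setprod P Q. e * p = p" "\<exists>b\<in>setprod Q P. p * b = p"
  using NE assms unfolding nearly_eps_strongly_graded_def s_unital_bimod_def
  by (metis minus_minus)+

lemma unitR:
  assumes "r \<in> R"
  shows "\<exists>e\<in>R. e * r = r" "\<exists>b\<in>R. r * b = r"
  using NE assms RR_R unfolding nearly_eps_strongly_graded_def s_unital_bimod_def
  by (metis minus_zero subsetD)+

lemma setprodQP_list:
  "x \<in> setprod Q P \<Longrightarrow> \<exists>l. set l \<subseteq> Q \<times> P \<and> x = (\<Sum>(a,b)\<leftarrow>l. a * b)"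
  by (rule setprod_list) (auto intro: negG)

lemma setprodQP_mult:
  assumes "x \<in> setprod Q P" "y \<in> setprod Q P"
  shows "x * y \<in> setprod Q P"
proof -
  obtain l where l: "set l \<subseteq> Q \<times> P" "x = (\<Sum>(a,b)\<leftarrow>l. a * b)"
    using setprodQP_list[OF assms(1)] by blast
  have yR: "y \<in> R" using assms(2) QP_R by auto
  have "x * y = (\<Sum>(a,b)\<leftarrow>map (\<lambda>(a,b). (a, b * y)) l. a * b)"
    unfolding l(2) sum_list_pair_mult_right by (induction l) auto
  moreover have "set (map (\<lambda>(a,b). (a, b * y)) l) \<subseteq> Q \<times> P"
    using l(1) yR PR by auto
  ultimately show ?thesis using list_in_setprod by metis
qed

lemma setprodQP_sg: "add_subgroup (setprod Q P)"
  unfolding setprod_def by (rule add_subgroup_add_span)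

lemma FS_Q:
  assumes "finite F" "F \<subseteq> Q"
  shows "\<exists>u\<in>setprod Q P. \<forall>q\<in>F. u * q = q"
  using assms
proof (induction F rule: finite_induct)
  case empty
  then show ?case using setprodQP_sg by (auto simp: add_subgroup_def)
next
  case (insert a F)
  then obtain u' where u': "u' \<in> setprod Q P" "\<forall>q\<in>F. u' * q = q" by auto
  have aQ: "a \<in> Q" using insert by auto
  have "u' * a \<in> Q" using u'(1) QP_R aQ RQ by auto
  then have "a - u' * a \<in> Q" using aQ diffG by auto
  then obtain e where e: "e \<in> setprod Q P" "e * (a - u' * a) = a - u' * a" using unitQ(1) by blast
  define u where "u = u' + e - e * u'"
  have "u \<in> setprod Q P" unfolding u_def
    using u'(1) e(1) setprodQP_mult setprodQP_sg
    by (metis add_subgroup_def add_subgroup_diff)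
  moreover have "u * a = a"
    using e(2) unfolding u_def by (simp add: algebra_simps)
  moreover have "\<forall>q\<in>F. u * q = q"
    using u'(2) unfolding u_def by (simp add: algebra_simps mult.assoc)
  ultimately show ?case by auto
qed

lemma FS_P:
  assumes "finite F" "F \<subseteq> P"
  shows "\<exists>u\<in>setprod Q P. \<forall>p\<in>F. p * u = p"
  using assms
proof (induction F rule: finite_induct)
  case empty
  then show ?case using setprodQP_sg by (auto simp: add_subgroup_def)
next
  case (insert a F)
  then obtain u' where u': "u' \<in> setprod Q P" "\<forall>p\<in>F. p * u' = p" by auto
  have aP: "a \<in> P" using insert by auto
  have "a * u' \<in> P" using u'(1) QP_R aP PR by auto
  then have "a - a * u' \<in> P" using aP diffG by auto
  then obtain e where e: "e \<in> setprod Q P" "(a - a * u') * e = a - a * u'" using unitP(2) by blast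
  define u where "u = u' + e - u' * e"
  have "u \<in> setprod Q P" unfolding u_def
    using u'(1) e(1) setprodQP_mult setprodQP_sg
    by (metis add_subgroup_def add_subgroup_diff)
  moreover have "a * u = a"
    using e(2) unfolding u_def by (simp add: algebra_simps mult.assoc)
  moreover have "\<forall>p\<in>F. p * u = p"
    using u'(2) unfolding u_def by (simp add: algebra_simps mult.assoc[symmetric])
  ultimately show ?case by auto
qed

lemma FS_Q_list:
  assumes "finite F" "F \<subseteq> Q"
  shows "\<exists>l. set l \<subseteq> Q \<times> P \<and> (\<forall>q\<in>F. (\<Sum>(a,b)\<leftarrow>l. a * (b * q)) = q)"
proof -
  obtain u where u: "u \<in> setprod Q P" "\<forall>q\<in>F. u * q = q" using FS_Q[OF assms] by blast
  obtain l where "set l \<subseteq> Q \<times> P" "u = (\<Sum>(a,b)\<leftarrow>l. a * b)" using setprodQP_list[OF u(1)] by blast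
  then show ?thesis using u(2) sum_list_pair_mult_right by metis
qed

lemma FS_P_list:
  assumes "finite F" "F \<subseteq> P"
  shows "\<exists>l. set l \<subseteq> Q \<times> P \<and> (\<forall>p\<in>F. (\<Sum>(a,b)\<leftarrow>l. (p * a) * b) = p)"
proof -
  obtain u where u: "u \<in> setprod Q P" "\<forall>p\<in>F. p * u = p" using FS_P[OF assms] by blast
  obtain l where "set l \<subseteq> Q \<times> P" "u = (\<Sum>(a,b)\<leftarrow>l. a * b)" using setprodQP_list[OF u(1)] by blast
  then show ?thesis using u(2) sum_list_pair_mult_left by metis
qed


abbreviation "T \<equiv> toeplitz_grading R P Q iP iQ iR"

lemma cov: "cov_rep R P Q (\<lambda>a b. a * b) iP iQ iR"
  using toep by (simp add: toeplitz_rep_def graded_cov_rep_def surj_cov_rep_def)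

lemma ZT: "Z_graded T"
  using toep by (simp add: toeplitz_rep_def graded_cov_rep_def)

lemma T_incl: "iR ` R \<subseteq> T 0" "iQ ` Q \<subseteq> T 1" "iP ` P \<subseteq> T (-1)"
  using toep by (simp_all add: toeplitz_rep_def graded_cov_rep_def)

lemma sgT: "add_subgroup (T i)" using ZT by (simp add: Z_graded_def)
lemma mulT: "x \<in> T i \<Longrightarrow> y \<in> T j \<Longrightarrow> x * y \<in> T (i + j)"
  using ZT by (simp add: Z_graded_def)

lemma iR_add: "r \<in> R \<Longrightarrow> r' \<in> R \<Longrightarrow> iR (r + r') = iR r + iR r'"
  using cov by (simp add: cov_rep_def)
lemma iR_mult: "r \<in> R \<Longrightarrow> r' \<in> R \<Longrightarrow> iR (r * r') = iR r * iR r'"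
  using cov by (simp add: cov_rep_def)
lemma iP_add: "p \<in> P \<Longrightarrow> p' \<in> P \<Longrightarrow> iP (p + p') = iP p + iP p'"
  using cov by (simp add: cov_rep_def)
lemma iQ_add: "q \<in> Q \<Longrightarrow> q' \<in> Q \<Longrightarrow> iQ (q + q') = iQ q + iQ q'"
  using cov by (simp add: cov_rep_def)
lemma iP_R: "p \<in> P \<Longrightarrow> r \<in> R \<Longrightarrow> iP (p * r) = iP p * iR r \<and> iP (r * p) = iR r * iP p"
  using cov by (simp add: cov_rep_def)
lemma iQ_R: "q \<in> Q \<Longrightarrow> r \<in> R \<Longrightarrow> iQ (q * r) = iQ q * iR r \<and> iQ (r * q) = iR r * iQ q"
  using cov by (simp add: cov_rep_def)
lemma iPQ: "p \<in> P \<Longrightarrow> q \<in> Q \<Longrightarrow> iR (p * q) = iP p * iQ q"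
  using cov by (simp add: cov_rep_def)

lemma additive_zero_neg:
  fixes f :: "'a \<Rightarrow> 'b"
  assumes "\<And>x y. x \<in> G i \<Longrightarrow> y \<in> G i \<Longrightarrow> f (x + y) = f x + f y"
  shows "f 0 = 0" "x \<in> G i \<Longrightarrow> f (- x) = - f x"
proof -
  show f0: "f 0 = 0" using assms[of 0 0] zeroG by simp
  assume x: "x \<in> G i"
  have "f (x + - x) = f x + f (- x)" using assms[OF x negG[OF x]] .
  then show "f (- x) = - f x" using f0 by (simp add: eq_neg_iff_add_eq_0 add.commute)
qed

lemma iR0: "iR 0 = 0" using additive_zero_neg[of 0 iR] iR_add by blast
lemma iP0: "iP 0 = 0" using additive_zero_neg[of "-1" iP] iP_add by blast
lemma iQ0: "iQ 0 = 0" using additive_zero_neg[of 1 iQ] iQ_add by blast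
lemma iR_neg: "r \<in> R \<Longrightarrow> iR (- r) = - iR r" using additive_zero_neg[of 0 iR] iR_add by blast
lemma iP_neg: "p \<in> P \<Longrightarrow> iP (- p) = - iP p" using additive_zero_neg[of "-1" iP] iP_add by blast
lemma iQ_neg: "q \<in> Q \<Longrightarrow> iQ (- q) = - iQ q" using additive_zero_neg[of 1 iQ] iQ_add by blast

lemma sumG: "(\<And>x. x \<in> set xs \<Longrightarrow> f x \<in> G i) \<Longrightarrow> (\<Sum>x\<leftarrow>xs. f x) \<in> G i"
  by (rule add_subgroup_sum_list[OF sg])

lemma iQ_sum: "(\<And>x. x \<in> set xs \<Longrightarrow> f x \<in> Q) \<Longrightarrow> iQ (\<Sum>x\<leftarrow>xs. f x) = (\<Sum>x\<leftarrow>xs. iQ (f x))"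
proof (induction xs)
  case Nil then show ?case by (simp add: iQ0)
next
  case (Cons a xs) then show ?case by (simp add: iQ_add sumG)
qed

lemma iP_sum: "(\<And>x. x \<in> set xs \<Longrightarrow> f x \<in> P) \<Longrightarrow> iP (\<Sum>x\<leftarrow>xs. f x) = (\<Sum>x\<leftarrow>xs. iP (f x))"
proof (induction xs)
  case Nil then show ?case by (simp add: iP0)
next
  case (Cons a xs) then show ?case by (simp add: iP_add sumG)
qed

section \<open>The canonical map phi0 from the Toeplitz ring onto A\<close>

lemma cov_id: "cov_rep R P Q (\<lambda>a b. a * b) id id id"
  by (simp add: cov_rep_def)

definition phi0 :: "'b \<Rightarrow> 'a" where
  "phi0 = (SOME \<phi>. rep_morph R P Q iP iQ iR id id id \<phi>)"

lemma phi0_morph: "rep_morph R P Q iP iQ iR id id id phi0"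
proof -
  have "\<exists>!\<phi>. rep_morph R P Q iP iQ iR id id id \<phi>"
    using univ_a cov_id unfolding universal_for_def by blast
  then show ?thesis unfolding phi0_def by (metis someI_ex)
qed

lemma phi0_hom: "ring_hom phi0" using phi0_morph by (simp add: rep_morph_def)
lemma phi0_iP: "p \<in> P \<Longrightarrow> phi0 (iP p) = p" using phi0_morph by (simp add: rep_morph_def)
lemma phi0_iQ: "q \<in> Q \<Longrightarrow> phi0 (iQ q) = q" using phi0_morph by (simp add: rep_morph_def)
lemma phi0_iR: "r \<in> R \<Longrightarrow> phi0 (iR r) = r" using phi0_morph by (simp add: rep_morph_def)

lemmas phi0_simps = ring_hom_add[OF phi0_hom] ring_hom_mult[OF phi0_hom] ring_hom_neg[OF phi0_hom]
  ring_hom_diff[OF phi0_hom] ring_hom_zero[OF phi0_hom] ring_hom_sum_list[OF phi0_hom]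
lemmas rho_simps = ring_hom_add[OF rho_hom] ring_hom_mult[OF rho_hom] ring_hom_neg[OF rho_hom]
  ring_hom_diff[OF rho_hom] ring_hom_zero[OF rho_hom] ring_hom_sum_list[OF rho_hom]

section \<open>The Cuntz-Pimsner ideal\<close>

abbreviation "Ann \<equiv> ann0 G"

definition K :: "'a set" where
  "K = {x \<in> R. in_FPQ (\<lambda>a b. a * b) P Q (\<lambda>y. x * y) \<and> x \<in> perp R Ann}"

lemma annD: "a \<in> Ann \<Longrightarrow> a \<in> R \<and> (\<forall>x\<in>Q. a * x = 0)"
  by (simp add: ann0_def)

lemma P_ann: assumes "p \<in> P" "a \<in> Ann" shows "p * a = 0"
proof -
  have aR: "a \<in> R" using annD[OF assms(2)] by blast
  have pa: "p * a \<in> P" using PR[OF assms(1) aR] .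
  obtain b where b: "b \<in> setprod Q P" "p * a * b = p * a" using unitP(2)[OF pa] by blast
  obtain l where l: "set l \<subseteq> Q \<times> P" "b = (\<Sum>(x,y)\<leftarrow>l. x * y)" using setprodQP_list[OF b(1)] by blast
  have "p * a * b = (\<Sum>(x,y)\<leftarrow>l. (p * a * x) * y)" unfolding l(2) by (rule sum_list_pair_mult_left)
  also have "\<dots> = 0" using l(1) annD[OF assms(2)]
    by (induction l) (auto simp: mult.assoc)
  finally show ?thesis using b(2) by simp
qed

lemma ann_ideal: assumes "a \<in> Ann" "s \<in> R" shows "s * a \<in> Ann" "a * s \<in> Ann"
  using assms RR RQ by (auto simp: ann0_def mult.assoc)

lemma perp_ann_zero: "x \<in> Ann \<Longrightarrow> x \<in> perp R Ann \<Longrightarrow> x = 0"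
  using preCP by (auto simp: pre_CP_def)

lemma in_FPQ_iff: "in_FPQ (\<lambda>a b. a * b) P Q f \<longleftrightarrow>
    (\<exists>l. set l \<subseteq> Q \<times> P \<and> (\<forall>y\<in>Q. f y = (\<Sum>(q,p)\<leftarrow>l. q * (p * y))))"
  by (simp add: in_FPQ_def)

lemma K_ideal: "is_ideal R K"
proof -
  have sub: "K \<subseteq> R" by (auto simp: K_def)
  have z: "0 \<in> K" by (auto simp: K_def in_FPQ_iff perp_def zeroG intro!: exI[of _ "[]"])
  have a: "x + y \<in> K" if "x \<in> K" "y \<in> K" for x y
  proof -
    obtain l1 where l1: "set l1 \<subseteq> Q \<times> P" "\<forall>z\<in>Q. x * z = (\<Sum>(q,p)\<leftarrow>l1. q * (p * z))"
      using \<open>x \<in> K\<close> unfolding K_def in_FPQ_iff mem_Collect_eq by blast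
    obtain l2 where l2: "set l2 \<subseteq> Q \<times> P" "\<forall>z\<in>Q. y * z = (\<Sum>(q,p)\<leftarrow>l2. q * (p * z))"
      using \<open>y \<in> K\<close> unfolding K_def in_FPQ_iff mem_Collect_eq by blast
    have "in_FPQ (\<lambda>a b. a * b) P Q (\<lambda>z. (x + y) * z)"
      unfolding in_FPQ_iff using l1 l2 by (intro exI[of _ "l1 @ l2"]) (auto simp: distrib_right)
    moreover have "x + y \<in> perp R Ann" using that by (auto simp: K_def perp_def addG distrib_left distrib_right)
    moreover have "x + y \<in> R" using that by (auto simp: K_def addG)
    ultimately show ?thesis unfolding K_def by blast
  qed
  have n: "- x \<in> K" if "x \<in> K" for x
  proof -
    obtain l1 where l1: "set l1 \<subseteq> Q \<times> P" "\<forall>z\<in>Q. x * z = (\<Sum>(q,p)\<leftarrow>l1. q * (p * z))"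
      using \<open>x \<in> K\<close> unfolding K_def in_FPQ_iff mem_Collect_eq by blast
    have e: "- (\<Sum>(q,p)\<leftarrow>l1. q * (p * z)) = (\<Sum>(q,p)\<leftarrow>map (\<lambda>(q,p). (-q,p)) l1. q * (p * z))" for z
      by (induction l1) auto
    have "in_FPQ (\<lambda>a b. a * b) P Q (\<lambda>z. (- x) * z)"
      unfolding in_FPQ_iff using l1 e negG by (intro exI[of _ "map (\<lambda>(q,p). (-q,p)) l1"]) auto
    moreover have "- x \<in> perp R Ann" using that by (auto simp: K_def perp_def negG)
    moreover have "- x \<in> R" using that by (auto simp: K_def negG)
    ultimately show ?thesis unfolding K_def by blast
  qed
  have lm: "s * x \<in> K \<and> x * s \<in> K" if "s \<in> R" "x \<in> K" for s x
  proof -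
    obtain l1 where l1: "set l1 \<subseteq> Q \<times> P" "\<forall>z\<in>Q. x * z = (\<Sum>(q,p)\<leftarrow>l1. q * (p * z))"
      using \<open>x \<in> K\<close> unfolding K_def in_FPQ_iff mem_Collect_eq by blast
    have xR: "x \<in> R" and xp: "x \<in> perp R Ann" using that(2) by (auto simp: K_def)
    have e1: "s * (\<Sum>(q,p)\<leftarrow>l1. q * (p * z)) = (\<Sum>(q,p)\<leftarrow>map (\<lambda>(q,p). (s*q,p)) l1. q * (p * z))" for z
      by (induction l1) (auto simp: distrib_left mult.assoc)
    have f1: "in_FPQ (\<lambda>a b. a * b) P Q (\<lambda>z. (s * x) * z)"
      unfolding in_FPQ_iff using l1 e1 RQ[OF that(1)]
      by (intro exI[of _ "map (\<lambda>(q,p). (s*q,p)) l1"]) (auto simp: mult.assoc)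
    have f2: "in_FPQ (\<lambda>a b. a * b) P Q (\<lambda>z. (x * s) * z)"
      unfolding in_FPQ_iff using l1 PR that(1) RQ[OF that(1)]
      by (intro exI[of _ "map (\<lambda>(q,p). (q,p*s)) l1"]) (auto simp: mult.assoc split: prod.splits
        intro!: arg_cong[where f=sum_list] map_cong)
    have p1: "s * x \<in> perp R Ann" using xp that(1) xR ann_ideal
      by (auto simp: perp_def RR mult.assoc[symmetric]) (metis mult.assoc)
    have p2: "x * s \<in> perp R Ann" using xp that(1) xR ann_ideal
      by (auto simp: perp_def RR mult.assoc) (metis mult.assoc)
    show ?thesis using f1 f2 p1 p2 RR[OF that(1) xR] RR[OF xR that(1)] unfolding K_def by blast
  qed
  show ?thesis unfolding is_ideal_def add_subgroup_def using sub z a n lm by blast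
qed

lemma K_compat: "psi_compatible R P Q (\<lambda>a b. a * b) K"
  using K_ideal by (auto simp: psi_compatible_def K_def)

lemma K_faithful: "faithful_ideal Q K"
  unfolding faithful_ideal_def
proof (intro ballI impI)
  fix x assume "x \<in> K" "\<forall>y\<in>Q. x * y = 0"
  then have "x \<in> Ann" "x \<in> perp R Ann" by (auto simp: K_def ann0_def)
  then show "x = 0" by (rule perp_ann_zero)
qed

lemma sub_K:
  assumes "psi_compatible R P Q (\<lambda>a b. a * b) J" "faithful_ideal Q J"
  shows "J \<subseteq> K"
proof
  fix x assume xJ: "x \<in> J"
  have JR: "J \<subseteq> R" and Jc: "\<forall>s\<in>R. \<forall>x\<in>J. s * x \<in> J \<and> x * s \<in> J"
    using assms(1) by (auto simp: psi_compatible_def is_ideal_def)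
  have xR: "x \<in> R" using xJ JR by auto
  have "x \<in> perp R Ann" unfolding perp_def
  proof (safe intro!: xR)
    fix a assume a: "a \<in> Ann"
    have aR: "a \<in> R" using annD[OF a] by blast
    have "x * a \<in> J" using Jc aR xJ by blast
    moreover have "\<forall>y\<in>Q. x * a * y = 0" using annD[OF a] by (simp add: mult.assoc)
    ultimately show "x * a = 0" using assms(2) by (simp add: faithful_ideal_def)
    have "a * x \<in> J" using Jc aR xJ by blast
    moreover have "\<forall>y\<in>Q. a * x * y = 0" using annD[OF a] RQ[OF xR] by (simp add: mult.assoc)
    ultimately show "a * x = 0" using assms(2) by (simp add: faithful_ideal_def)
  qed
  then show "x \<in> K" using xR xJ assms(1) by (auto simp: K_def psi_compatible_def)
qed

lemma K_max: "maximal_cf_ideal R P Q (\<lambda>a b. a * b) K"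
  unfolding maximal_cf_ideal_def using K_compat K_faithful sub_K by blast

lemma CP_wd: "CP_well_defined R P Q (\<lambda>a b. a * b)"
  unfolding CP_well_defined_def
proof (rule ex1I[of _ K])
  show "maximal_cf_ideal R P Q (\<lambda>a b. a * b) K" by (rule K_max)
  fix J assume "maximal_cf_ideal R P Q (\<lambda>a b. a * b) J"
  then show "J = K" using sub_K K_compat K_faithful unfolding maximal_cf_ideal_def by blast
qed

lemma CP_ideal_K: "CP_ideal R P Q (\<lambda>a b. a * b) = K"
proof -
  have "\<exists>!J. maximal_cf_ideal R P Q (\<lambda>a b. a * b) J" using CP_wd by (simp add: CP_well_defined_def)
  then show ?thesis unfolding CP_ideal_def using K_max by (metis the1_equality)
qed

lemma TJ_gen:
  assumes "x \<in> K" "set l \<subseteq> Q \<times> P" "\<forall>y\<in>Q. x * y = (\<Sum>(q,p)\<leftarrow>l. q * (p * y))"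
  shows "\<rho> (iR x - (\<Sum>(q,p)\<leftarrow>l. iQ q * iP p)) = 0"
proof -
  have "iR x - (\<Sum>(q,p)\<leftarrow>l. iQ q * iP p) \<in> toeplitz_ideal R P Q (\<lambda>a b. a * b) iP iQ iR K"
    unfolding toeplitz_ideal_def using assms by (intro gen_ideal.base) blast
  then show ?thesis using rho_ker CP_ideal_K by auto
qed


section \<open>Local units in the Toeplitz ring\<close>

definition LQ :: "'b set" where "LQ = add_span ({iQ q * z | q z. q \<in> Q} \<union> iQ ` Q)"
definition RP :: "'b set" where "RP = add_span ({z * iP p | z p. p \<in> P} \<union> iP ` P)"

lemma sum_list_lin_add:
  fixes x y :: "'b"
  shows "(\<Sum>(a,c)\<leftarrow>l. f a c * (x + y)) = (\<Sum>(a,c)\<leftarrow>l. f a c * x) + (\<Sum>(a,c)\<leftarrow>l. f a c * y)"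
  by (induction l) (auto simp: algebra_simps)

lemma sum_list_lin_neg:
  fixes x :: "'b"
  shows "(\<Sum>(a,c)\<leftarrow>l. f a c * (- x)) = - (\<Sum>(a,c)\<leftarrow>l. f a c * x)"
  by (induction l) (auto simp: algebra_simps)

lemma sum_list_lin_add_r:
  fixes x y :: "'b"
  shows "(\<Sum>(a,c)\<leftarrow>l. (x + y) * f a c) = (\<Sum>(a,c)\<leftarrow>l. x * f a c) + (\<Sum>(a,c)\<leftarrow>l. y * f a c)"
  by (induction l) (auto simp: algebra_simps)

lemma sum_list_lin_neg_r:
  fixes x :: "'b"
  shows "(\<Sum>(a,c)\<leftarrow>l. (- x) * f a c) = - (\<Sum>(a,c)\<leftarrow>l. x * f a c)"
  by (induction l) (auto simp: algebra_simps)

lemma LQ_gen_comp1: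
  assumes "set l \<subseteq> Q \<times> P" "q \<in> Q"
  shows "(\<Sum>(a,c)\<leftarrow>l. iQ a * (iP c * (iQ q * z))) = iQ (\<Sum>(a,c)\<leftarrow>l. a * (c * q)) * z"
  using assms
proof (induction l)
  case Nil then show ?case by (simp add: iQ0 iP0)
next
  case (Cons ac l)
  obtain a c where ac: "ac = (a,c)" by force
  have aQ: "a \<in> Q" and cP: "c \<in> P" using Cons.prems ac by auto
  have cq: "c * q \<in> R" using PQ cP Cons.prems by auto
  have e: "iQ a * (iP c * iQ q) = iQ (a * (c * q))"
    using iPQ[OF cP Cons.prems(2)] iQ_R[OF aQ cq] by simp
  have mem: "a * (c * q) \<in> Q" using QR[OF aQ cq] .
  have memS: "(\<Sum>(a,c)\<leftarrow>l. a * (c * q)) \<in> Q"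
    using Cons.prems by (intro sumG) (auto intro!: QR PQ)
  have IH: "(\<Sum>(a,c)\<leftarrow>l. iQ a * (iP c * (iQ q * z))) = iQ (\<Sum>(a,c)\<leftarrow>l. a * (c * q)) * z"
    using Cons.IH Cons.prems by auto
  have e2: "iQ a * (iP c * (iQ q * z)) = iQ (a * (c * q)) * z" using e by (metis mult.assoc)
  show ?case using IH e2 ac iQ_add[OF mem memS] by (simp add: distrib_right)
qed

lemma LQ_gen_comp2:
  assumes "set l \<subseteq> Q \<times> P" "q \<in> Q"
  shows "(\<Sum>(a,c)\<leftarrow>l. iQ a * (iP c * iQ q)) = iQ (\<Sum>(a,c)\<leftarrow>l. a * (c * q))"
  using assms
proof (induction l)
  case Nil then show ?case by (simp add: iQ0 iP0)
next
  case (Cons ac l)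
  obtain a c where ac: "ac = (a,c)" by force
  have aQ: "a \<in> Q" and cP: "c \<in> P" using Cons.prems ac by auto
  have cq: "c * q \<in> R" using PQ cP Cons.prems by auto
  have e: "iQ a * (iP c * iQ q) = iQ (a * (c * q))"
    using iPQ[OF cP Cons.prems(2)] iQ_R[OF aQ cq] by simp
  have mem: "a * (c * q) \<in> Q" using QR[OF aQ cq] .
  have memS: "(\<Sum>(a,c)\<leftarrow>l. a * (c * q)) \<in> Q"
    using Cons.prems by (intro sumG) (auto intro!: QR PQ)
  have IH: "(\<Sum>(a,c)\<leftarrow>l. iQ a * (iP c * iQ q)) = iQ (\<Sum>(a,c)\<leftarrow>l. a * (c * q))"
    using Cons.IH Cons.prems by auto
  show ?case using IH e ac iQ_add[OF mem memS] by simp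
qed

lemma LQ_unit:
  assumes "b \<in> LQ"
  shows "\<exists>F. finite F \<and> F \<subseteq> Q \<and> (\<forall>l. set l \<subseteq> Q \<times> P \<longrightarrow> (\<forall>q\<in>F. (\<Sum>(a,c)\<leftarrow>l. a * (c * q)) = q)
           \<longrightarrow> (\<Sum>(a,c)\<leftarrow>l. iQ a * (iP c * b)) = b)"
  using assms unfolding LQ_def
proof induction
  case (base x)
  then show ?case
  proof
    assume "x \<in> {iQ q * z |q z. q \<in> Q}"
    then obtain q z where x: "x = iQ q * z" "q \<in> Q" by auto
    show ?thesis using x LQ_gen_comp1[of _ q z] by (intro exI[of _ "{q}"]) auto
  next
    assume "x \<in> iQ ` Q"
    then obtain q where x: "x = iQ q" "q \<in> Q" by auto
    show ?thesis using x LQ_gen_comp2[of _ q] by (intro exI[of _ "{q}"]) auto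
  qed
next
  case zero
  have "(\<Sum>(a,c)\<leftarrow>l. iQ a * (iP c * 0)) = 0" for l :: "('a \<times> 'a) list" by (induction l) auto
  then show ?case by (intro exI[of _ "{}"]) auto
next
  case (add x y)
  then obtain F1 F2 where F: "finite F1" "F1 \<subseteq> Q" "finite F2" "F2 \<subseteq> Q"
    "\<forall>l. set l \<subseteq> Q \<times> P \<longrightarrow> (\<forall>q\<in>F1. (\<Sum>(a,c)\<leftarrow>l. a * (c * q)) = q) \<longrightarrow> (\<Sum>(a,c)\<leftarrow>l. iQ a * (iP c * x)) = x"
    "\<forall>l. set l \<subseteq> Q \<times> P \<longrightarrow> (\<forall>q\<in>F2. (\<Sum>(a,c)\<leftarrow>l. a * (c * q)) = q) \<longrightarrow> (\<Sum>(a,c)\<leftarrow>l. iQ a * (iP c * y)) = y"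
    by blast
  show ?case
  proof (intro exI[of _ "F1 \<union> F2"] conjI allI impI)
    fix l :: "('a \<times> 'a) list"
    assume "set l \<subseteq> Q \<times> P" "\<forall>q\<in>F1 \<union> F2. (\<Sum>(a,c)\<leftarrow>l. a * (c * q)) = q"
    then show "(\<Sum>(a,c)\<leftarrow>l. iQ a * (iP c * (x + y))) = x + y"
      using F(5,6) sum_list_lin_add[of "\<lambda>a c. iQ a * iP c" x y l]
      by (simp add: mult.assoc)
  qed (use F in auto)
next
  case (neg x)
  then obtain F1 where F: "finite F1" "F1 \<subseteq> Q"
    "\<forall>l. set l \<subseteq> Q \<times> P \<longrightarrow> (\<forall>q\<in>F1. (\<Sum>(a,c)\<leftarrow>l. a * (c * q)) = q) \<longrightarrow> (\<Sum>(a,c)\<leftarrow>l. iQ a * (iP c * x)) = x"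
    by blast
  show ?case
  proof (intro exI[of _ F1] conjI allI impI)
    fix l :: "('a \<times> 'a) list"
    assume "set l \<subseteq> Q \<times> P" "\<forall>q\<in>F1. (\<Sum>(a,c)\<leftarrow>l. a * (c * q)) = q"
    then show "(\<Sum>(a,c)\<leftarrow>l. iQ a * (iP c * (- x))) = - x"
      using F(3) sum_list_lin_neg[of "\<lambda>a c. iQ a * iP c" x l]
      by (simp add: mult.assoc)
  qed (use F in auto)
qed

lemma RP_gen_comp1:
  assumes "set l \<subseteq> Q \<times> P" "p \<in> P"
  shows "(\<Sum>(a,c)\<leftarrow>l. z * iP p * iQ a * iP c) = z * iP (\<Sum>(a,c)\<leftarrow>l. (p * a) * c)"
  using assms
proof (induction l)
  case Nil then show ?case by (simp add: iQ0 iP0)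
next
  case (Cons ac l)
  obtain a c where ac: "ac = (a,c)" by force
  have aQ: "a \<in> Q" and cP: "c \<in> P" using Cons.prems ac by auto
  have pa: "p * a \<in> R" using PQ aQ Cons.prems by auto
  have e: "iP p * iQ a * iP c = iP ((p * a) * c)"
    using iPQ[OF Cons.prems(2) aQ] iP_R[OF cP pa] by simp
  have mem: "(p * a) * c \<in> P" using RP[OF pa cP] .
  have memS: "(\<Sum>(a,c)\<leftarrow>l. (p * a) * c) \<in> P"
    using Cons.prems by (intro sumG) (auto intro!: RP PQ)
  have IH: "(\<Sum>(a,c)\<leftarrow>l. z * iP p * iQ a * iP c) = z * iP (\<Sum>(a,c)\<leftarrow>l. (p * a) * c)"
    using Cons.IH Cons.prems by auto
  have e2: "z * iP p * iQ a * iP c = z * iP ((p * a) * c)" using e by (simp add: mult.assoc)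
  show ?case using IH e2 ac iP_add[OF mem memS] by (simp add: algebra_simps)
qed

lemma RP_gen_comp2:
  assumes "set l \<subseteq> Q \<times> P" "p \<in> P"
  shows "(\<Sum>(a,c)\<leftarrow>l. iP p * iQ a * iP c) = iP (\<Sum>(a,c)\<leftarrow>l. (p * a) * c)"
  using assms
proof (induction l)
  case Nil then show ?case by (simp add: iQ0 iP0)
next
  case (Cons ac l)
  obtain a c where ac: "ac = (a,c)" by force
  have aQ: "a \<in> Q" and cP: "c \<in> P" using Cons.prems ac by auto
  have pa: "p * a \<in> R" using PQ aQ Cons.prems by auto
  have e: "iP p * iQ a * iP c = iP ((p * a) * c)"
    using iPQ[OF Cons.prems(2) aQ] iP_R[OF cP pa] by simp
  have mem: "(p * a) * c \<in> P" using RP[OF pa cP] .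
  have memS: "(\<Sum>(a,c)\<leftarrow>l. (p * a) * c) \<in> P"
    using Cons.prems by (intro sumG) (auto intro!: RP PQ)
  have IH: "(\<Sum>(a,c)\<leftarrow>l. iP p * iQ a * iP c) = iP (\<Sum>(a,c)\<leftarrow>l. (p * a) * c)"
    using Cons.IH Cons.prems by auto
  show ?case using IH e ac iP_add[OF mem memS] by simp
qed

lemma RP_unit:
  assumes "b \<in> RP"
  shows "\<exists>F. finite F \<and> F \<subseteq> P \<and> (\<forall>l. set l \<subseteq> Q \<times> P \<longrightarrow> (\<forall>p\<in>F. (\<Sum>(a,c)\<leftarrow>l. (p * a) * c) = p)
           \<longrightarrow> (\<Sum>(a,c)\<leftarrow>l. b * iQ a * iP c) = b)"
  using assms unfolding RP_def
proof induction
  case (base x)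
  then show ?case
  proof
    assume "x \<in> {z * iP p |z p. p \<in> P}"
    then obtain p z where x: "x = z * iP p" "p \<in> P" by auto
    show ?thesis using x RP_gen_comp1[of _ p z] by (intro exI[of _ "{p}"]) auto
  next
    assume "x \<in> iP ` P"
    then obtain p where x: "x = iP p" "p \<in> P" by auto
    show ?thesis using x RP_gen_comp2[of _ p] by (intro exI[of _ "{p}"]) auto
  qed
next
  case zero
  have "(\<Sum>(a,c)\<leftarrow>l. 0 * iQ a * iP c) = (0::'b)" for l :: "('a \<times> 'a) list" by (induction l) auto
  then show ?case by (intro exI[of _ "{}"]) auto
next
  case (add x y)
  then obtain F1 F2 where F: "finite F1" "F1 \<subseteq> P" "finite F2" "F2 \<subseteq> P"
    "\<forall>l. set l \<subseteq> Q \<times> P \<longrightarrow> (\<forall>p\<in>F1. (\<Sum>(a,c)\<leftarrow>l. (p * a) * c) = p) \<longrightarrow> (\<Sum>(a,c)\<leftarrow>l. x * iQ a * iP c) = x"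
    "\<forall>l. set l \<subseteq> Q \<times> P \<longrightarrow> (\<forall>p\<in>F2. (\<Sum>(a,c)\<leftarrow>l. (p * a) * c) = p) \<longrightarrow> (\<Sum>(a,c)\<leftarrow>l. y * iQ a * iP c) = y"
    by blast
  show ?case
  proof (intro exI[of _ "F1 \<union> F2"] conjI allI impI)
    fix l :: "('a \<times> 'a) list"
    assume "set l \<subseteq> Q \<times> P" "\<forall>p\<in>F1 \<union> F2. (\<Sum>(a,c)\<leftarrow>l. (p * a) * c) = p"
    then show "(\<Sum>(a,c)\<leftarrow>l. (x + y) * iQ a * iP c) = x + y"
      using F(5,6) sum_list_lin_add_r[of x y "\<lambda>a c. iQ a * iP c" l]
      by (simp add: mult.assoc)
  qed (use F in auto)
next
  case (neg x)
  then obtain F1 where F: "finite F1" "F1 \<subseteq> P"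
    "\<forall>l. set l \<subseteq> Q \<times> P \<longrightarrow> (\<forall>p\<in>F1. (\<Sum>(a,c)\<leftarrow>l. (p * a) * c) = p) \<longrightarrow> (\<Sum>(a,c)\<leftarrow>l. x * iQ a * iP c) = x"
    by blast
  show ?case
  proof (intro exI[of _ F1] conjI allI impI)
    fix l :: "('a \<times> 'a) list"
    assume "set l \<subseteq> Q \<times> P" "\<forall>p\<in>F1. (\<Sum>(a,c)\<leftarrow>l. (p * a) * c) = p"
    then show "(\<Sum>(a,c)\<leftarrow>l. (- x) * iQ a * iP c) = - x"
      using F(3) sum_list_lin_neg_r[of x "\<lambda>a c. iQ a * iP c" l]
      by (simp add: mult.assoc)
  qed (use F in auto)
qed

lemma rho_sum_zero:
  assumes "\<And>a c. (a,c) \<in> set l \<Longrightarrow> \<rho> (f a c) = 0"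
  shows "\<rho> (\<Sum>(a,c)\<leftarrow>l. f a c) = 0"
  using assms by (induction l) (auto simp: rho_simps)

lemma LQ_apply:
  assumes "b \<in> LQ" "\<And>c. c \<in> P \<Longrightarrow> \<rho> (iP c * b) = 0"
  shows "\<rho> b = 0"
proof -
  obtain F where F: "finite F" "F \<subseteq> Q" "\<forall>l. set l \<subseteq> Q \<times> P \<longrightarrow> (\<forall>q\<in>F. (\<Sum>(a,c)\<leftarrow>l. a * (c * q)) = q)
           \<longrightarrow> (\<Sum>(a,c)\<leftarrow>l. iQ a * (iP c * b)) = b" using LQ_unit[OF assms(1)] by blast
  obtain l where l: "set l \<subseteq> Q \<times> P" "\<forall>q\<in>F. (\<Sum>(a,c)\<leftarrow>l. a * (c * q)) = q"
    using FS_Q_list[OF F(1,2)] by blast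
  have "b = (\<Sum>(a,c)\<leftarrow>l. iQ a * (iP c * b))" using F(3) l by auto
  moreover have "\<rho> (\<Sum>(a,c)\<leftarrow>l. iQ a * (iP c * b)) = 0"
    using l(1) assms(2) by (intro rho_sum_zero) (auto simp: rho_simps)
  ultimately show ?thesis by simp
qed

lemma RP_apply:
  assumes "b \<in> RP" "\<And>a. a \<in> Q \<Longrightarrow> \<rho> (b * iQ a) = 0"
  shows "\<rho> b = 0"
proof -
  obtain F where F: "finite F" "F \<subseteq> P" "\<forall>l. set l \<subseteq> Q \<times> P \<longrightarrow> (\<forall>p\<in>F. (\<Sum>(a,c)\<leftarrow>l. (p * a) * c) = p)
           \<longrightarrow> (\<Sum>(a,c)\<leftarrow>l. b * iQ a * iP c) = b" using RP_unit[OF assms(1)] by blast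
  obtain l where l: "set l \<subseteq> Q \<times> P" "\<forall>p\<in>F. (\<Sum>(a,c)\<leftarrow>l. (p * a) * c) = p"
    using FS_P_list[OF F(1,2)] by blast
  have "b = (\<Sum>(a,c)\<leftarrow>l. b * iQ a * iP c)" using F(3) l by auto
  moreover have "\<rho> (\<Sum>(a,c)\<leftarrow>l. b * iQ a * iP c) = 0"
    using l(1) assms(2) by (intro rho_sum_zero) (auto simp: rho_simps)
  ultimately show ?thesis by simp
qed


lemma nprod_Cons: "xs \<noteq> [] \<Longrightarrow> nprod (x # xs) = x * nprod xs"
  by (cases xs) auto

lemma nprod_snoc: "xs \<noteq> [] \<Longrightarrow> nprod (xs @ [x]) = nprod xs * x"
proof (induction xs)
  case Nil then show ?case by simp
next
  case (Cons a xs)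
  show ?case
  proof (cases "xs = []")
    case True then show ?thesis by simp
  next
    case False
    then have "nprod (a # xs @ [x]) = a * nprod (xs @ [x])" by (simp add: nprod_Cons)
    then show ?thesis using Cons.IH False by (simp add: nprod_Cons mult.assoc)
  qed
qed

lemma hom_nprod: "ring_hom h \<Longrightarrow> h (nprod xs) = nprod (map h xs)"
  by (induction xs rule: nprod.induct) (auto simp: ring_hom_zero ring_hom_mult)

lemma nprod_G: "set xs \<subseteq> G i \<Longrightarrow> xs \<noteq> [] \<Longrightarrow> nprod xs \<in> G (i * int (length xs))"
proof (induction xs rule: nprod.induct)
  case (3 x y xs)
  then have "x * nprod (y # xs) \<in> G (i + i * int (length (y # xs)))" by (intro mulG) auto
  moreover have "i + i * int (length (y # xs)) = i * int (length (x # y # xs))" by (simp add: algebra_simps)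
  ultimately show ?case by simp
qed auto

lemma tmon0: "tmon f g S X 0 = f ` S" by (simp add: tmon_def)
lemma tmonpos: "m > 0 \<Longrightarrow> tmon f g S X m = {nprod (map g xs) | xs. length xs = m \<and> set xs \<subseteq> X}"
  by (simp add: tmon_def)

lemma phi0_tmonQ: "x \<in> tmon iR iQ R Q m \<Longrightarrow> phi0 x \<in> G (int m)"
proof (cases "m = 0")
  case True
  assume "x \<in> tmon iR iQ R Q m"
  then show ?thesis using True by (auto simp: tmon0 phi0_iR)
next
  case False
  assume "x \<in> tmon iR iQ R Q m"
  then obtain xs where xs: "x = nprod (map iQ xs)" "length xs = m" "set xs \<subseteq> Q"
    using False by (auto simp: tmonpos)
  have "map phi0 (map iQ xs) = xs" using xs(3) by (induction xs) (auto simp: phi0_iQ)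
  then have "phi0 x = nprod xs" using xs(1) hom_nprod[OF phi0_hom] by simp
  then show ?thesis using nprod_G[OF xs(3)] xs(2) False by auto
qed

lemma phi0_tmonP: "x \<in> tmon iR iP R P m \<Longrightarrow> phi0 x \<in> G (- int m)"
proof (cases "m = 0")
  case True
  assume "x \<in> tmon iR iP R P m"
  then show ?thesis using True by (auto simp: tmon0 phi0_iR)
next
  case False
  assume "x \<in> tmon iR iP R P m"
  then obtain xs where xs: "x = nprod (map iP xs)" "length xs = m" "set xs \<subseteq> P"
    using False by (auto simp: tmonpos)
  have "map phi0 (map iP xs) = xs" using xs(3) by (induction xs) (auto simp: phi0_iP)
  then have "phi0 x = nprod xs" using xs(1) hom_nprod[OF phi0_hom] by simp
  then show ?thesis using nprod_G[OF xs(3)] xs(2) False by auto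
qed

lemma preimage_sg: "add_subgroup {b. phi0 b \<in> G i}"
  by (auto simp: add_subgroup_def phi0_simps zeroG addG negG)

lemma phi0_T: "b \<in> T i \<Longrightarrow> phi0 b \<in> G i"
proof -
  assume b: "b \<in> T i"
  have "T i \<subseteq> {b. phi0 b \<in> G i}"
    unfolding toeplitz_grading_def
  proof (rule add_span_sub[OF preimage_sg], safe)
    fix x y m n assume "x \<in> tmon iR iQ R Q m" "y \<in> tmon iR iP R P n" "i = int m - int n"
    then show "phi0 (x * y) \<in> G (int m - int n)"
      using mulG[OF phi0_tmonQ phi0_tmonP] by (simp add: phi0_simps)
  next
    fix r x y m n assume "r \<in> R" "x \<in> tmon iR iQ R Q m" "y \<in> tmon iR iP R P n" "i = int m - int n"
    then show "phi0 (iR r * x * y) \<in> G (int m - int n)"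
      using mulG[OF mulG[OF _ phi0_tmonQ] phi0_tmonP, of r 0] by (simp add: phi0_simps phi0_iR)
  qed
  then show ?thesis using b by auto
qed

lemma tmonQ_head:
  assumes "m > 0" "x \<in> tmon iR iQ R Q m"
  shows "\<exists>q\<in>Q. x = iQ q \<or> (\<exists>z. x = iQ q * z)"
proof -
  obtain xs where xs: "x = nprod (map iQ xs)" "length xs = m" "set xs \<subseteq> Q"
    using assms by (auto simp: tmonpos)
  then obtain q xs' where "xs = q # xs'" using assms(1) by (cases xs) auto
  then show ?thesis using xs by (cases xs') auto
qed

lemma tmonP_tail:
  assumes "m > 0" "y \<in> tmon iR iP R P m"
  shows "\<exists>p\<in>P. y = iP p \<or> (\<exists>z. y = z * iP p)"
proof -
  obtain xs where xs: "y = nprod (map iP xs)" "length xs = m" "set xs \<subseteq> P"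
    using assms by (auto simp: tmonpos)
  then obtain p xs' where e: "xs = xs' @ [p]" using assms(1) by (cases xs rule: rev_exhaust) auto
  show ?thesis
  proof (cases "xs' = []")
    case True then show ?thesis using xs e by auto
  next
    case False
    then have "y = nprod (map iP xs') * iP p" using xs(1) e by (simp add: nprod_snoc)
    then show ?thesis using xs e by auto
  qed
qed

lemma LQ_sg: "add_subgroup LQ" unfolding LQ_def by (rule add_subgroup_add_span)
lemma RP_sg: "add_subgroup RP" unfolding RP_def by (rule add_subgroup_add_span)
lemma LQ_gen: "q \<in> Q \<Longrightarrow> iQ q * z \<in> LQ" unfolding LQ_def by (rule add_span.base) blast
lemma LQ_gen': "q \<in> Q \<Longrightarrow> iQ q \<in> LQ" unfolding LQ_def by (rule add_span.base) blast
lemma RP_gen: "p \<in> P \<Longrightarrow> z * iP p \<in> RP" unfolding RP_def by (rule add_span.base) blast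
lemma RP_gen': "p \<in> P \<Longrightarrow> iP p \<in> RP" unfolding RP_def by (rule add_span.base) blast

lemma T_pos_gen:
  assumes "m > 0" "x \<in> tmon iR iQ R Q m" "r \<in> R"
  shows "x * y \<in> LQ" "iR r * x * y \<in> LQ"
proof -
  obtain q where q: "q \<in> Q" "x = iQ q \<or> (\<exists>z. x = iQ q * z)" using tmonQ_head assms by blast
  have e: "iR r * iQ q = iQ (r * q)" using iQ_R[OF q(1) assms(3)] by simp
  have rq: "r * q \<in> Q" using RQ[OF assms(3) q(1)] .
  from q(2) obtain z where "x * y = iQ q * z \<and> iR r * x * y = iQ (r * q) * z"
  proof
    assume "x = iQ q"
    then show ?thesis using that[of y] e by (simp add: mult.assoc)
  next
    assume "\<exists>z. x = iQ q * z"
    then obtain z where "x = iQ q * z" by blast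
    then show ?thesis using that[of "z * y"] e by (simp add: mult.assoc[symmetric])
  qed
  then show "x * y \<in> LQ" "iR r * x * y \<in> LQ" using LQ_gen q(1) rq by auto
qed

lemma T_neg_gen:
  assumes "n > 0" "y \<in> tmon iR iP R P n"
  shows "x * y \<in> RP" "iR r * x * y \<in> RP"
proof -
  obtain p where p: "p \<in> P" "y = iP p \<or> (\<exists>z. y = z * iP p)" using tmonP_tail assms by blast
  from p(2) obtain z where "x * y = z * iP p \<and> iR r * x * y = (iR r * z) * iP p"
  proof
    assume "y = iP p"
    then show ?thesis using that[of x] by (simp add: mult.assoc)
  next
    assume "\<exists>z. y = z * iP p"
    then obtain z where "y = z * iP p" by blast
    then show ?thesis using that[of "x * z"] by (simp add: mult.assoc)
  qed
  then show "x * y \<in> RP" "iR r * x * y \<in> RP" using RP_gen p(1) by auto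
qed

lemma T_pos: "i > 0 \<Longrightarrow> T i \<subseteq> LQ"
  unfolding toeplitz_grading_def
proof (rule add_span_sub[OF LQ_sg])
  assume "i > 0"
  show "{x * y |x y m n. x \<in> tmon iR iQ R Q m \<and> y \<in> tmon iR iP R P n \<and> int m - int n = i} \<union>
    {iR r * x * y |r x y m n. r \<in> R \<and> x \<in> tmon iR iQ R Q m \<and> y \<in> tmon iR iP R P n \<and> int m - int n = i} \<subseteq> LQ"
  proof (rule subsetI)
    fix b assume "b \<in> {x * y |x y m n. x \<in> tmon iR iQ R Q m \<and> y \<in> tmon iR iP R P n \<and> int m - int n = i} \<union>
      {iR r * x * y |r x y m n. r \<in> R \<and> x \<in> tmon iR iQ R Q m \<and> y \<in> tmon iR iP R P n \<and> int m - int n = i}"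
    then show "b \<in> LQ"
    proof (elim UnE)
      assume "b \<in> {x * y |x y m n. x \<in> tmon iR iQ R Q m \<and> y \<in> tmon iR iP R P n \<and> int m - int n = i}"
      then obtain x y m n where b: "b = x * y" "x \<in> tmon iR iQ R Q m" "int m - int n = i" by blast
      then have "m > 0" using \<open>i > 0\<close> by linarith
      then show ?thesis using T_pos_gen(1)[OF _ b(2) zeroG] b(1) by blast
    next
      assume "b \<in> {iR r * x * y |r x y m n. r \<in> R \<and> x \<in> tmon iR iQ R Q m \<and> y \<in> tmon iR iP R P n \<and> int m - int n = i}"
      then obtain r x y m n where b: "b = iR r * x * y" "r \<in> R" "x \<in> tmon iR iQ R Q m" "int m - int n = i" by blast
      then have "m > 0" using \<open>i > 0\<close> by linarith
      then show ?thesis using T_pos_gen(2)[OF _ b(3) b(2)] b(1) by blast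
    qed
  qed
qed

lemma T_neg: "i < 0 \<Longrightarrow> T i \<subseteq> RP"
  unfolding toeplitz_grading_def
proof (rule add_span_sub[OF RP_sg])
  assume "i < 0"
  show "{x * y |x y m n. x \<in> tmon iR iQ R Q m \<and> y \<in> tmon iR iP R P n \<and> int m - int n = i} \<union>
    {iR r * x * y |r x y m n. r \<in> R \<and> x \<in> tmon iR iQ R Q m \<and> y \<in> tmon iR iP R P n \<and> int m - int n = i} \<subseteq> RP"
  proof (rule subsetI)
    fix b assume "b \<in> {x * y |x y m n. x \<in> tmon iR iQ R Q m \<and> y \<in> tmon iR iP R P n \<and> int m - int n = i} \<union>
      {iR r * x * y |r x y m n. r \<in> R \<and> x \<in> tmon iR iQ R Q m \<and> y \<in> tmon iR iP R P n \<and> int m - int n = i}"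
    then show "b \<in> RP"
    proof (elim UnE)
      assume "b \<in> {x * y |x y m n. x \<in> tmon iR iQ R Q m \<and> y \<in> tmon iR iP R P n \<and> int m - int n = i}"
      then obtain x y m n where b: "b = x * y" "y \<in> tmon iR iP R P n" "int m - int n = i" by blast
      then have "n > 0" using \<open>i < 0\<close> by linarith
      then show ?thesis using T_neg_gen(1)[OF _ b(2)] b(1) by blast
    next
      assume "b \<in> {iR r * x * y |r x y m n. r \<in> R \<and> x \<in> tmon iR iQ R Q m \<and> y \<in> tmon iR iP R P n \<and> int m - int n = i}"
      then obtain r x y m n where b: "b = iR r * x * y" "y \<in> tmon iR iP R P n" "int m - int n = i" by blast
      then have "n > 0" using \<open>i < 0\<close> by linarith
      then show ?thesis using T_neg_gen(2)[OF _ b(2)] b(1) by blast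
    qed
  qed
qed

fun M :: "nat \<Rightarrow> 'b set" where
  "M 0 = iR ` R"
| "M (Suc k) = {iQ q * x * iP p | q x p. q \<in> Q \<and> x \<in> M k \<and> p \<in> P}"

lemma M_lR: "r \<in> R \<Longrightarrow> x \<in> M k \<Longrightarrow> iR r * x \<in> M k"
proof (induction k)
  case 0
  then obtain r' where "x = iR r'" "r' \<in> R" by auto
  then show ?case using iR_mult RR 0 by (auto intro!: image_eqI[of _ iR "r * r'"])
next
  case (Suc k)
  then obtain q x' p where x: "x = iQ q * x' * iP p" "q \<in> Q" "x' \<in> M k" "p \<in> P" by auto
  have "iR r * x = iQ (r * q) * x' * iP p" using x iQ_R[OF x(2) Suc.prems(1)] by (simp add: mult.assoc)
  then show ?case using x RQ[OF Suc.prems(1) x(2)] by auto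
qed

lemma M_rR: "r \<in> R \<Longrightarrow> x \<in> M k \<Longrightarrow> x * iR r \<in> M k"
proof (induction k)
  case 0
  then obtain r' where "x = iR r'" "r' \<in> R" by auto
  then show ?case using iR_mult RR 0 by (auto intro!: image_eqI[of _ iR "r' * r"])
next
  case (Suc k)
  then obtain q x' p where x: "x = iQ q * x' * iP p" "q \<in> Q" "x' \<in> M k" "p \<in> P" by auto
  have "x * iR r = iQ q * x' * iP (p * r)" using x iP_R[OF x(4) Suc.prems(1)] by (simp add: mult.assoc)
  then show ?case using x PR[OF x(4) Suc.prems(1)] by auto
qed

lemma M_phi: "x \<in> M k \<Longrightarrow> phi0 x \<in> R"
proof (induction k arbitrary: x)
  case 0 then show ?case by (auto simp: phi0_iR)
next
  case (Suc k)
  then obtain q x' p where x: "x = iQ q * x' * iP p" "q \<in> Q" "x' \<in> M k" "p \<in> P" by auto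
  have "phi0 x = q * phi0 x' * p" using x by (simp add: phi0_simps phi0_iQ phi0_iP)
  then show ?case using x Suc.IH[OF x(3)] by (auto intro!: QP RQ QR)
qed

lemma M_down: "p \<in> P \<Longrightarrow> q \<in> Q \<Longrightarrow> x \<in> M (Suc k) \<Longrightarrow> iP p * x * iQ q \<in> M k"
proof -
  assume p: "p \<in> P" and q: "q \<in> Q" and "x \<in> M (Suc k)"
  then obtain q' x' p' where x: "x = iQ q' * x' * iP p'" "q' \<in> Q" "x' \<in> M k" "p' \<in> P" by auto
  have "iP p * x * iQ q = iR (p * q') * x' * iR (p' * q)"
    using x iPQ[OF p x(2)] iPQ[OF x(4) q] by (simp add: mult.assoc)
  then show ?thesis using M_lR M_rR x PQ p q by (metis)
qed

lemma M_down0: "p \<in> P \<Longrightarrow> q \<in> Q \<Longrightarrow> x \<in> M 0 \<Longrightarrow> iP p * x * iQ q \<in> M 0"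
proof -
  assume p: "p \<in> P" and q: "q \<in> Q" and "x \<in> M 0"
  then obtain r where r: "x = iR r" "r \<in> R" by auto
  have "iP p * x * iQ q = iR (p * r * q)" using r iP_R[OF p r(2)] iPQ[OF PR[OF p r(2)] q] by simp
  then show ?thesis using r p q PR PQ by auto
qed

lemma M_iQ: "x \<in> M k \<Longrightarrow> q \<in> Q \<Longrightarrow> x * iQ q \<in> LQ"
proof (cases k)
  case 0
  assume "x \<in> M k" "q \<in> Q"
  then obtain r where r: "x = iR r" "r \<in> R" using 0 by auto
  then have "x * iQ q = iQ (r * q)" using iQ_R[OF \<open>q \<in> Q\<close> r(2)] by simp
  then show ?thesis using RQ[OF r(2) \<open>q \<in> Q\<close>] unfolding LQ_def by (auto intro!: add_span.base)
next
  case (Suc k')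
  assume "x \<in> M k" "q \<in> Q"
  then obtain q' x' p' where x: "x = iQ q' * x' * iP p'" "q' \<in> Q" using Suc by auto
  then have "x * iQ q = iQ q' * (x' * iP p' * iQ q)" by (simp add: mult.assoc)
  then show ?thesis using x(2) unfolding LQ_def by (auto intro!: add_span.base)
qed

lemma QP_M:
  "length qs = Suc m \<Longrightarrow> length ps = Suc m \<Longrightarrow> set qs \<subseteq> Q \<Longrightarrow> set ps \<subseteq> P
    \<Longrightarrow> nprod (map iQ qs) * nprod (map iP ps) \<in> M (Suc m)"
proof (induction m arbitrary: qs ps)
  case 0
  then obtain q p where e: "qs = [q]" "ps = [p]" by (auto simp: length_Suc_conv)
  have q: "q \<in> Q" and p: "p \<in> P" using 0 e by auto
  obtain b where b: "b \<in> setprod P Q" "q * b = q" using unitQ(2)[OF q] by blast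
  have bR: "b \<in> R" using b(1) PQ_R by auto
  have "iQ q = iQ q * iR b" using iQ_R[OF q bR] b(2) by simp
  then have "iQ q * iP p = iQ q * iR b * iP p" by simp
  then show ?case using e q p bR by auto
next
  case (Suc m)
  obtain q qs' where eq: "qs = q # qs'" using Suc.prems(1) by (cases qs) auto
  obtain ps' p where ep: "ps = ps' @ [p]" using Suc.prems(2) by (cases ps rule: rev_exhaust) auto
  have l: "length qs' = Suc m" "length ps' = Suc m" using Suc.prems eq ep by auto
  have q: "q \<in> Q" "set qs' \<subseteq> Q" and p: "p \<in> P" "set ps' \<subseteq> P" using Suc.prems eq ep by auto
  have ne: "map iQ qs' \<noteq> []" "map iP ps' \<noteq> []" using l by auto
  have "nprod (map iQ qs) * nprod (map iP ps)
      = iQ q * (nprod (map iQ qs') * nprod (map iP ps')) * iP p"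
    using eq ep ne by (simp add: nprod_Cons nprod_snoc mult.assoc)
  moreover have "nprod (map iQ qs') * nprod (map iP ps') \<in> M (Suc m)" using Suc.IH[OF l q(2) p(2)] .
  ultimately show ?case unfolding M.simps(2)[of "Suc m"] using q p by blast
qed

lemma T_zero_gen:
  assumes x: "x \<in> tmon iR iQ R Q m" and y: "y \<in> tmon iR iP R P m" and r: "r \<in> R"
  shows "x * y \<in> add_span (\<Union>k. M k)" "iR r * x * y \<in> add_span (\<Union>k. M k)"
proof -
  have "\<exists>k. x * y \<in> M k"
  proof (cases m)
    case 0
    then obtain r1 r2 where "x = iR r1" "y = iR r2" "r1 \<in> R" "r2 \<in> R" using x y by (auto simp: tmon0)
    then have "x * y \<in> M 0" using iR_mult RR by (auto intro!: image_eqI[of _ iR "r1 * r2"])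
    then show ?thesis by blast
  next
    case (Suc m')
    then obtain qs ps where "x = nprod (map iQ qs)" "length qs = m" "set qs \<subseteq> Q"
      "y = nprod (map iP ps)" "length ps = m" "set ps \<subseteq> P" using x y by (auto simp: tmonpos)
    then have "x * y \<in> M m" using QP_M Suc by auto
    then show ?thesis by blast
  qed
  then obtain k where k: "x * y \<in> M k" by blast
  then have "iR r * (x * y) \<in> M k" using M_lR r by blast
  then show "x * y \<in> add_span (\<Union>k. M k)" "iR r * x * y \<in> add_span (\<Union>k. M k)"
    using k unfolding mult.assoc by (meson UNIV_I UN_I add_span.base)+
qed

lemma T_zero: "T 0 \<subseteq> add_span (\<Union>k. M k)"
  unfolding toeplitz_grading_def
proof (rule add_span_sub[OF add_subgroup_add_span])
  show "{x * y |x y m n. x \<in> tmon iR iQ R Q m \<and> y \<in> tmon iR iP R P n \<and> int m - int n = 0} \<union>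
    {iR r * x * y |r x y m n. r \<in> R \<and> x \<in> tmon iR iQ R Q m \<and> y \<in> tmon iR iP R P n \<and> int m - int n = 0}
    \<subseteq> add_span (\<Union>k. M k)"
  proof (rule subsetI)
    fix b assume "b \<in> {x * y |x y m n. x \<in> tmon iR iQ R Q m \<and> y \<in> tmon iR iP R P n \<and> int m - int n = 0} \<union>
      {iR r * x * y |r x y m n. r \<in> R \<and> x \<in> tmon iR iQ R Q m \<and> y \<in> tmon iR iP R P n \<and> int m - int n = 0}"
    then show "b \<in> add_span (\<Union>k. M k)"
    proof (elim UnE)
      assume "b \<in> {x * y |x y m n. x \<in> tmon iR iQ R Q m \<and> y \<in> tmon iR iP R P n \<and> int m - int n = 0}"
      then obtain x y m n where b: "b = x * y" "x \<in> tmon iR iQ R Q m" "y \<in> tmon iR iP R P n" "int m - int n = 0" by blast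
      then have "m = n" by linarith
      then show ?thesis using T_zero_gen(1)[OF b(2) _ zeroG] b by blast
    next
      assume "b \<in> {iR r * x * y |r x y m n. r \<in> R \<and> x \<in> tmon iR iQ R Q m \<and> y \<in> tmon iR iP R P n \<and> int m - int n = 0}"
      then obtain r x y m n where b: "b = iR r * x * y" "r \<in> R" "x \<in> tmon iR iQ R Q m" "y \<in> tmon iR iP R P n" "int m - int n = 0" by blast
      then have "m = n" by linarith
      then show ?thesis using T_zero_gen(2)[OF b(3) _ b(2)] b by blast
    qed
  qed
qed


section \<open>Levels and the degree zero part of the kernel\<close>

definition V :: "nat \<Rightarrow> 'b set" where "V k = add_span (\<Union>j\<in>{..k}. M j)"

lemma V_mono: "k \<le> k' \<Longrightarrow> V k \<subseteq> V k'"
  unfolding V_def apply (rule add_span_mono) apply (rule UN_mono) by auto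

lemma M_V: "x \<in> M j \<Longrightarrow> j \<le> k \<Longrightarrow> x \<in> V k"
  unfolding V_def by (rule add_span.base) auto

lemma span_V: "b \<in> add_span (\<Union>k. M k) \<Longrightarrow> \<exists>k. b \<in> V k"
proof (induction rule: add_span.induct)
  case (base x) then show ?case using M_V by blast
next
  case zero then show ?case unfolding V_def by (blast intro: add_span.zero)
next
  case (add x y)
  then obtain k1 k2 where "x \<in> V k1" "y \<in> V k2" by blast
  then have "x \<in> V (max k1 k2)" "y \<in> V (max k1 k2)" using V_mono[of k1 "max k1 k2"] V_mono[of k2 "max k1 k2"] by auto
  then show ?case unfolding V_def by (blast intro: add_span.add)
next
  case (neg x) then show ?case unfolding V_def by (blast intro: add_span.neg)
qed

lemma V_down:
  assumes "b \<in> V (Suc k)" "p \<in> P" "q \<in> Q"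
  shows "iP p * b * iQ q \<in> V k"
proof -
  have "b \<in> add_span (\<Union>j\<in>{..Suc k}. M j)" using assms(1) by (simp add: V_def)
  then show ?thesis
  proof induction
    case (base x)
    then obtain j where j: "j \<le> Suc k" "x \<in> M j" by auto
    show ?case
    proof (cases j)
      case 0 then show ?thesis using M_V[OF M_down0[OF assms(2,3) j(2)[unfolded 0]], of k] by simp
    next
      case (Suc j') then show ?thesis using M_V[OF M_down[OF assms(2,3) j(2)[unfolded Suc]], of k] j(1) Suc by simp
    qed
  next
    case zero then show ?case by (simp add: V_def add_span.zero)
  next
    case (add x y)
    have "iP p * (x + y) * iQ q = iP p * x * iQ q + iP p * y * iQ q" by (simp add: algebra_simps)
    then show ?case using add by (simp add: V_def add_span.add)
  next
    case (neg x)
    have "iP p * (- x) * iQ q = - (iP p * x * iQ q)" by simp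
    then show ?case using neg by (simp add: V_def add_span.neg)
  qed
qed

lemma V_iQ:
  assumes "b \<in> V k" "q \<in> Q"
  shows "b * iQ q \<in> LQ"
proof -
  have "b \<in> add_span (\<Union>j\<in>{..k}. M j)" using assms(1) by (simp add: V_def)
  then show ?thesis
  proof induction
    case (base x) then show ?case using M_iQ assms(2) by auto
  next
    case zero then show ?case using LQ_sg by (simp add: add_subgroup_def)
  next
    case (add x y) then show ?case using LQ_sg by (simp add: add_subgroup_def distrib_right)
  next
    case (neg x) then show ?case using LQ_sg by (simp add: add_subgroup_def)
  qed
qed

lemma V0: "b \<in> V 0 \<Longrightarrow> \<exists>r\<in>R. b = iR r"
proof -
  assume "b \<in> V 0"
  then have "b \<in> add_span (M 0)" by (simp add: V_def)
  then show ?thesis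
  proof induction
    case (base x) then show ?case by auto
  next
    case zero then show ?case using zeroG iR0 by metis
  next
    case (add x y) then show ?case using addG iR_add by metis
  next
    case (neg x) then show ?case using negG iR_neg by metis
  qed
qed

lemma V_decomp:
  assumes "b \<in> add_span (\<Union>k. M k)"
  shows "\<exists>r\<in>R. \<exists>L. set L \<subseteq> Q \<times> (\<Union>k. M k) \<times> P \<and> b = iR r + (\<Sum>(q,x,p)\<leftarrow>L. iQ q * x * iP p)"
  using assms
proof induction
  case (base x)
  then obtain j where j: "x \<in> M j" by auto
  show ?case
  proof (cases j)
    case 0 then show ?thesis using j by (auto intro!: exI[of _ "[]"])
  next
    case (Suc j')
    then obtain q x' p where x: "x = iQ q * x' * iP p" "q \<in> Q" "x' \<in> M j'" "p \<in> P" using j by auto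
    show ?thesis using x zeroG iR0 by (intro bexI[of _ 0] exI[of _ "[(q,x',p)]"]) auto
  qed
next
  case zero then show ?case using zeroG iR0 by (intro bexI[of _ 0] exI[of _ "[]"]) auto
next
  case (add x y)
  then obtain r1 L1 r2 L2 where a: "r1 \<in> R" "set L1 \<subseteq> Q \<times> (\<Union>k. M k) \<times> P" "x = iR r1 + (\<Sum>(q,x,p)\<leftarrow>L1. iQ q * x * iP p)"
    "r2 \<in> R" "set L2 \<subseteq> Q \<times> (\<Union>k. M k) \<times> P" "y = iR r2 + (\<Sum>(q,x,p)\<leftarrow>L2. iQ q * x * iP p)" by blast
  show ?case using a addG iR_add
    by (intro bexI[of _ "r1 + r2"] exI[of _ "L1 @ L2"]) (auto simp: algebra_simps)
next
  case (neg x)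
  then obtain r1 L1 where a: "r1 \<in> R" "set L1 \<subseteq> Q \<times> (\<Union>k. M k) \<times> P" "x = iR r1 + (\<Sum>(q,x,p)\<leftarrow>L1. iQ q * x * iP p)"
    by blast
  have e: "- (\<Sum>(q,x,p)\<leftarrow>L. iQ q * x * iP p) = (\<Sum>(q,x,p)\<leftarrow>map (\<lambda>(q,x,p). (-q,x,p)) L. iQ q * x * iP p)"
    if "set L \<subseteq> Q \<times> (\<Union>k. M k) \<times> P" for L
    using that by (induction L) (auto simp: iQ_neg)
  show ?case using a negG iR_neg e[OF a(2)]
    by (intro bexI[of _ "- r1"] exI[of _ "map (\<lambda>(q,x,p). (-q,x,p)) L1"]) auto
qed

lemma phi0_L:
  "set L \<subseteq> Q \<times> (\<Union>k. M k) \<times> P \<Longrightarrow>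
    phi0 (\<Sum>(q,x,p)\<leftarrow>L. iQ q * x * iP p) = (\<Sum>(q,x,p)\<leftarrow>L. q * phi0 x * p)"
  by (induction L) (auto simp: phi0_simps phi0_iQ phi0_iP)

lemma negL:
  "(\<Sum>(q,p')\<leftarrow>map (\<lambda>(q,x,p). (q, - (phi0 x * p))) L. q * p') = - (\<Sum>(q,x,p)\<leftarrow>L. q * phi0 x * p)"
  by (induction L) (auto simp: mult.assoc)

lemma RP_L: "set L \<subseteq> Q \<times> X \<times> P \<Longrightarrow> (\<Sum>(q,x,p)\<leftarrow>L. iQ q * x * iP p) \<in> RP"
  by (induction L) (auto intro!: RP_gen RP_sg[unfolded add_subgroup_def, THEN conjunct2, THEN conjunct1, rule_format]
      simp: RP_sg[unfolded add_subgroup_def])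

lemma RP_L': "set l \<subseteq> Q \<times> P \<Longrightarrow> (\<Sum>(q,p)\<leftarrow>l. iQ q * iP p) \<in> RP"
  by (induction l) (auto intro!: RP_gen RP_sg[unfolded add_subgroup_def, THEN conjunct2, THEN conjunct1, rule_format]
      simp: RP_sg[unfolded add_subgroup_def])

lemma deg0: "b \<in> V k \<Longrightarrow> phi0 b = 0 \<Longrightarrow> \<rho> b = 0"
proof (induction k arbitrary: b)
  case 0
  then obtain r where "r \<in> R" "b = iR r" using V0 by blast
  then show ?case using 0 phi0_iR iR0 rho_simps by auto
next
  case (Suc k)
  have b: "b \<in> V (Suc k)" and b0: "phi0 b = 0" by fact+
  have a: "\<rho> (iP p * b * iQ q) = 0" if "p \<in> P" "q \<in> Q" for p q
    using Suc.IH[OF V_down[OF b that]] b0 by (simp add: phi0_simps)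
  have bq: "\<rho> (b * iQ q) = 0" if q: "q \<in> Q" for q
    by (rule LQ_apply[OF V_iQ[OF b q]]) (use a q in \<open>simp add: mult.assoc\<close>)
  have "b \<in> add_span (\<Union>k. M k)" using b unfolding V_def by (rule subsetD[OF add_span_mono, rotated]) auto
  then obtain r L where rL: "r \<in> R" "set L \<subseteq> Q \<times> (\<Union>k. M k) \<times> P"
    "b = iR r + (\<Sum>(q,x,p)\<leftarrow>L. iQ q * x * iP p)" using V_decomp by blast
  define L' where "L' = map (\<lambda>(q,x,p). (q, - (phi0 x * p))) L"
  have L'QP: "set L' \<subseteq> Q \<times> P" unfolding L'_def using rL(2) M_phi RP negG by fastforce
  have "0 = r + (\<Sum>(q,x,p)\<leftarrow>L. q * phi0 x * p)"
    using b0 rL phi0_L[OF rL(2)] by (simp add: phi0_simps phi0_iR)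
  then have r_eq: "r = (\<Sum>(q,p')\<leftarrow>L'. q * p')" unfolding L'_def negL by (simp add: eq_neg_iff_add_eq_0)
  have rK: "r \<in> K"
  proof -
    have "\<forall>y\<in>Q. r * y = (\<Sum>(q,p)\<leftarrow>L'. q * (p * y))" unfolding r_eq sum_list_pair_mult_right by simp
    then have "in_FPQ (\<lambda>a b. a * b) P Q (\<lambda>y. r * y)" unfolding in_FPQ_iff using L'QP by blast
    moreover have "r \<in> perp R Ann"
    proof -
      have "r * a = 0 \<and> a * r = 0" if a: "a \<in> Ann" for a
      proof
        have "r * a = (\<Sum>(q,p)\<leftarrow>L'. q * (p * a))" unfolding r_eq sum_list_pair_mult_right ..
        also have "\<dots> = 0" using L'QP P_ann[OF _ a] by (induction L') auto
        finally show "r * a = 0" .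
        have "a * r = (\<Sum>(q,p)\<leftarrow>L'. (a * q) * p)" unfolding r_eq sum_list_pair_mult_left ..
        also have "\<dots> = 0" using L'QP annD[OF a] by (induction L') auto
        finally show "a * r = 0" .
      qed
      then show ?thesis using rL(1) by (auto simp: perp_def)
    qed
    ultimately show ?thesis using rL(1) by (simp add: K_def)
  qed
  have wit: "\<forall>y\<in>Q. r * y = (\<Sum>(q,p)\<leftarrow>L'. q * (p * y))" unfolding r_eq sum_list_pair_mult_right by simp
  define d where "d = iR r - (\<Sum>(q,p)\<leftarrow>L'. iQ q * iP p)"
  have d0: "\<rho> d = 0" unfolding d_def by (rule TJ_gen[OF rK L'QP wit])
  define c where "c = b - d"
  have c_eq: "c = (\<Sum>(q,x,p)\<leftarrow>L. iQ q * x * iP p) + (\<Sum>(q,p)\<leftarrow>L'. iQ q * iP p)"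
    unfolding c_def d_def using rL(3) by simp
  have cRP: "c \<in> RP" unfolding c_eq using RP_L[OF rL(2)] RP_L'[OF L'QP] RP_sg by (simp add: add_subgroup_def)
  have "\<rho> (c * iQ a) = 0" if "a \<in> Q" for a
    using bq[OF that] d0 unfolding c_def by (simp add: left_diff_distrib rho_simps)
  then have "\<rho> c = 0" using RP_apply[OF cRP] by blast
  then show ?case using d0 unfolding c_def by (simp add: rho_simps)
qed

lemma ker_T_nonneg: "b \<in> T (int n) \<Longrightarrow> phi0 b = 0 \<Longrightarrow> \<rho> b = 0"
proof (induction n arbitrary: b)
  case 0
  then obtain k where "b \<in> V k" using T_zero span_V by force
  then show ?case using deg0 0 by blast
next
  case (Suc n)
  have bL: "b \<in> LQ" using T_pos Suc.prems(1) by force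
  show ?case
  proof (rule LQ_apply[OF bL])
    fix c assume c: "c \<in> P"
    have "iP c * b \<in> T (-1 + int (Suc n))" using mulT T_incl(3) c Suc.prems(1) by blast
    then have "iP c * b \<in> T (int n)" by simp
    then show "\<rho> (iP c * b) = 0" using Suc.IH Suc.prems(2) by (simp add: phi0_simps)
  qed
qed

lemma ker_T_nonpos: "b \<in> T (- int n) \<Longrightarrow> phi0 b = 0 \<Longrightarrow> \<rho> b = 0"
proof (induction n arbitrary: b)
  case 0
  then show ?case using ker_T_nonneg[of b 0] by simp
next
  case (Suc n)
  have bL: "b \<in> RP" using T_neg Suc.prems(1) by force
  show ?case
  proof (rule RP_apply[OF bL])
    fix a assume a: "a \<in> Q"
    have "b * iQ a \<in> T (- int (Suc n) + 1)" using mulT T_incl(2) a Suc.prems(1) by blast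
    then have "b * iQ a \<in> T (- int n)" by simp
    then show "\<rho> (b * iQ a) = 0" using Suc.IH Suc.prems(2) by (simp add: phi0_simps)
  qed
qed

lemma ker_T: "b \<in> T i \<Longrightarrow> phi0 b = 0 \<Longrightarrow> \<rho> b = 0"
proof (cases "i \<ge> 0")
  case True
  assume "b \<in> T i" "phi0 b = 0"
  then show ?thesis using ker_T_nonneg[of b "nat i"] True by simp
next
  case False
  assume "b \<in> T i" "phi0 b = 0"
  then show ?thesis using ker_T_nonpos[of b "nat (- i)"] False by simp
qed


section \<open>Kernels and the isomorphism\<close>

lemma decomp_G:
  assumes "finite S" "\<forall>j. g j \<in> G j" "\<forall>j. j \<notin> S \<longrightarrow> g j = 0"
  shows "finite {j. g j \<noteq> 0}" "sum g {j. g j \<noteq> 0} = sum g S"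
proof -
  have sub: "{j. g j \<noteq> 0} \<subseteq> S" using assms(3) by auto
  then show "finite {j. g j \<noteq> 0}" using assms(1) finite_subset by blast
  show "sum g {j. g j \<noteq> 0} = sum g S" by (rule sum.mono_neutral_left[OF assms(1) sub]) auto
qed

lemma decomp_unique:
  assumes "finite S" "\<forall>j. g j \<in> G j" "\<forall>j. j \<notin> S \<longrightarrow> g j = 0"
    and "finite S'" "\<forall>j. h j \<in> G j" "\<forall>j. j \<notin> S' \<longrightarrow> h j = 0"
    and "sum g S = sum h S'"
  shows "g = h"
proof -
  have ex: "\<exists>!f. finite {i. f i \<noteq> 0} \<and> (\<forall>i. f i \<in> G i) \<and> sum g S = (\<Sum>i\<in>{i. f i \<noteq> 0}. f i)"
    using ZG by (simp add: Z_graded_def)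
  have "finite {i. g i \<noteq> 0} \<and> (\<forall>i. g i \<in> G i) \<and> sum g S = (\<Sum>i\<in>{i. g i \<noteq> 0}. g i)"
    using decomp_G[OF assms(1-3)] assms(2) by auto
  moreover have "finite {i. h i \<noteq> 0} \<and> (\<forall>i. h i \<in> G i) \<and> sum g S = (\<Sum>i\<in>{i. h i \<noteq> 0}. h i)"
    using decomp_G[OF assms(4-6)] assms(5,7) by auto
  ultimately show ?thesis using ex by blast
qed

lemma T_decomp: "\<exists>f. finite {i. f i \<noteq> 0} \<and> (\<forall>i. f i \<in> T i) \<and> b = (\<Sum>i\<in>{i. f i \<noteq> 0}. f i)"
  using ZT by (simp add: Z_graded_def) blast

lemma ker_phi0: "phi0 b = 0 \<Longrightarrow> \<rho> b = 0"
proof -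
  assume b0: "phi0 b = 0"
  obtain f where f: "finite {i. f i \<noteq> 0}" "\<forall>i. f i \<in> T i" "b = (\<Sum>i\<in>{i. f i \<noteq> 0}. f i)"
    using T_decomp by blast
  define S where "S = {i. f i \<noteq> 0}"
  have "(\<lambda>i. phi0 (f i)) = (\<lambda>_. 0)"
  proof (rule decomp_unique[of S _ "{}"])
    show "finite S" using f(1) S_def by simp
    show "\<forall>j. phi0 (f j) \<in> G j" using f(2) phi0_T by blast
    show "\<forall>j. j \<notin> S \<longrightarrow> phi0 (f j) = 0" using S_def by (simp add: phi0_simps)
    show "sum (\<lambda>i. phi0 (f i)) S = sum (\<lambda>_. 0) {}"
      using b0 f(3) ring_hom_sum[OF phi0_hom, of f S] S_def by simp
  qed (auto simp: zeroG)
  then have "\<forall>i. \<rho> (f i) = 0" using ker_T f(2) by (metis (mono_tags))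
  then show "\<rho> b = 0" using f(3) ring_hom_sum[OF rho_hom, of f] by simp
qed

lemma phi0_sumQP: "set l \<subseteq> Q \<times> P \<Longrightarrow> phi0 (\<Sum>(q,p)\<leftarrow>l. iQ q * iP p) = (\<Sum>(q,p)\<leftarrow>l. q * p)"
  by (induction l) (auto simp: phi0_simps phi0_iQ phi0_iP)

lemma ker_rho: "\<rho> b = 0 \<Longrightarrow> phi0 b = 0"
proof -
  assume "\<rho> b = 0"
  then have "b \<in> toeplitz_ideal R P Q (\<lambda>a b. a * b) iP iQ iR K" using rho_ker CP_ideal_K by auto
  then have "b \<in> gen_ideal UNIV {iR x - (\<Sum>(q,p)\<leftarrow>l. iQ q * iP p) | x l. x \<in> K \<and> set l \<subseteq> Q \<times> P
        \<and> (\<forall>y\<in>Q. x * y = (\<Sum>(q,p)\<leftarrow>l. q * (p * y)))}" by (simp add: toeplitz_ideal_def)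
  then show "phi0 b = 0"
  proof induction
    case (base z)
    then obtain x l where z: "z = iR x - (\<Sum>(q,p)\<leftarrow>l. iQ q * iP p)" "x \<in> K" "set l \<subseteq> Q \<times> P"
      "\<forall>y\<in>Q. x * y = (\<Sum>(q,p)\<leftarrow>l. q * (p * y))" by blast
    have xR: "x \<in> R" and xp: "x \<in> perp R Ann" using z(2) by (auto simp: K_def)
    define d where "d = x - (\<Sum>(q,p)\<leftarrow>l. q * p)"
    have pz: "phi0 z = d" unfolding z(1) d_def using phi0_sumQP[OF z(3)] xR by (simp add: phi0_simps phi0_iR)
    have sR: "(\<Sum>(q,p)\<leftarrow>l. q * p) \<in> R" using z(3) by (intro sumG) (auto intro: QP)
    have dR: "d \<in> R" unfolding d_def using xR sR diffG by blast
    have "d * y = 0" if "y \<in> Q" for y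
      using z(4) that unfolding d_def by (simp add: left_diff_distrib sum_list_pair_mult_right)
    then have dA: "d \<in> Ann" using dR by (simp add: ann0_def)
    have "d * a = 0 \<and> a * d = 0" if a: "a \<in> Ann" for a
    proof
      have "(\<Sum>(q,p)\<leftarrow>l. q * p) * a = (\<Sum>(q,p)\<leftarrow>l. q * (p * a))" by (rule sum_list_pair_mult_right)
      also have "\<dots> = 0" using z(3) P_ann[OF _ a] by (induction l) auto
      finally show "d * a = 0" unfolding d_def using xp a by (simp add: perp_def left_diff_distrib)
      have "a * (\<Sum>(q,p)\<leftarrow>l. q * p) = (\<Sum>(q,p)\<leftarrow>l. (a * q) * p)" by (rule sum_list_pair_mult_left)
      also have "\<dots> = 0" using z(3) annD[OF a] by (induction l) auto
      finally show "a * d = 0" unfolding d_def using xp a by (simp add: perp_def right_diff_distrib)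
    qed
    then have "d \<in> perp R Ann" using dR by (simp add: perp_def)
    then show ?case using pz perp_ann_zero[OF dA] by simp
  qed (auto simp: phi0_simps)
qed

lemma setpow_gen: "Y \<subseteq> gen_subring X \<Longrightarrow> setpow Y n \<subseteq> gen_subring X"
proof (induction Y n rule: setpow.induct)
  case (1 Y)
  then show ?case
    by simp (rule add_span_sub, auto simp: add_subgroup_def intro: gen_subring.intros)
next
  case (2 Y) then show ?case by simp
next
  case (3 Y n)
  then have IH: "setpow Y (Suc n) \<subseteq> gen_subring X" by simp
  show ?case unfolding setpow.simps setprod_def
    by (rule add_span_sub) (use 3(2) IH in \<open>auto simp: add_subgroup_def intro: gen_subring.intros\<close>)
qed

lemma SS: "semi_saturated G" using preCP by (simp add: pre_CP_def)

lemma G_gen: "G i \<subseteq> gen_subring (R \<union> P \<union> Q)"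
proof -
  have R: "R \<subseteq> gen_subring (R \<union> P \<union> Q)" "P \<subseteq> gen_subring (R \<union> P \<union> Q)" "Q \<subseteq> gen_subring (R \<union> P \<union> Q)"
    by (auto intro: gen_subring.base)
  consider "i = 0" | n where "n > 0" "i = int n" | n where "n > 0" "i = - int n"
  proof -
    assume a: "i = 0 \<Longrightarrow> thesis" "\<And>n. 0 < n \<Longrightarrow> i = int n \<Longrightarrow> thesis" "\<And>n. 0 < n \<Longrightarrow> i = - int n \<Longrightarrow> thesis"
    show thesis
    proof (cases "i = 0")
      case True then show ?thesis using a(1) by blast
    next
      case False
      show ?thesis
      proof (cases "i > 0")
        case True then show ?thesis using a(2)[of "nat i"] by simp
      next
        case False2: False
        then show ?thesis using a(3)[of "nat (- i)"] False by simp
      qed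
    qed
  qed
  then show ?thesis
  proof cases
    case 1 then show ?thesis using R by simp
  next
    case (2 n)
    then have "G i = setpow Q n" using SS by (simp add: semi_saturated_def)
    then show ?thesis using setpow_gen[OF R(3)] by simp
  next
    case (3 n)
    then have "G i = setpow P n" using SS by (simp add: semi_saturated_def)
    then show ?thesis using setpow_gen[OF R(2)] by simp
  qed
qed

lemma gen_all: "gen_subring (R \<union> P \<union> Q) = UNIV"
proof -
  have sg': "add_subgroup (gen_subring (R \<union> P \<union> Q))"
    by (auto simp: add_subgroup_def intro: gen_subring.intros)
  have "x \<in> gen_subring (R \<union> P \<union> Q)" for x
  proof -
    obtain f where f: "finite {i. f i \<noteq> 0}" "\<forall>i. f i \<in> G i" "x = (\<Sum>i\<in>{i. f i \<noteq> 0}. f i)"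
      using ZG by (simp add: Z_graded_def) blast
    show ?thesis unfolding f(3) by (rule add_subgroup_sum[OF sg']) (use f(2) G_gen in blast)
  qed
  then show ?thesis by auto
qed

lemma phi0_surj: "\<exists>b. phi0 b = x"
proof -
  let ?I = "{x. \<exists>b. phi0 b = x}"
  have "gen_subring (R \<union> P \<union> Q) \<subseteq> ?I"
  proof
    fix x assume "x \<in> gen_subring (R \<union> P \<union> Q)"
    then show "x \<in> ?I"
    proof induction
      case (base x) then show ?case using phi0_iR phi0_iP phi0_iQ by blast
    next
      case zero
      have "phi0 0 = 0" by (simp add: phi0_simps)
      then show ?case by blast
    next
      case (add x y)
      then obtain b c where "phi0 b = x" "phi0 c = y" by blast
      then have "phi0 (b + c) = x + y" by (simp add: phi0_simps)
      then show ?case by blast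
    next
      case (neg x)
      then obtain b where "phi0 b = x" by blast
      then have "phi0 (- b) = - x" by (simp add: phi0_simps)
      then show ?case by blast
    next
      case (mult x y)
      then obtain b c where "phi0 b = x" "phi0 c = y" by blast
      then have "phi0 (b * c) = x * y" by (simp add: phi0_simps)
      then show ?case by blast
    qed
  qed
  then show ?thesis using gen_all by auto
qed

definition Phi :: "'a \<Rightarrow> 'c" where "Phi x = \<rho> (SOME b. phi0 b = x)"

lemma Phi_phi0: "Phi (phi0 b) = \<rho> b"
proof -
  have "phi0 (SOME c. phi0 c = phi0 b) = phi0 b" by (rule someI) rule
  then have "phi0 ((SOME c. phi0 c = phi0 b) - b) = 0" by (simp add: phi0_simps)
  then have "\<rho> ((SOME c. phi0 c = phi0 b) - b) = 0" by (rule ker_phi0)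
  then show ?thesis unfolding Phi_def by (simp add: rho_simps)
qed

lemma Phi_hom: "ring_hom Phi"
  unfolding ring_hom_def
proof (intro allI conjI)
  fix x y
  obtain b c where "phi0 b = x" "phi0 c = y" using phi0_surj by metis
  then show "Phi (x + y) = Phi x + Phi y" "Phi (x * y) = Phi x * Phi y"
    using Phi_phi0[of "b + c"] Phi_phi0[of "b * c"] Phi_phi0[of b] Phi_phi0[of c]
    by (auto simp: phi0_simps rho_simps)
qed

lemma Phi_bij: "bij Phi"
proof (rule bijI)
  show "inj Phi"
  proof (rule injI)
    fix x y assume e: "Phi x = Phi y"
    obtain b c where bc: "phi0 b = x" "phi0 c = y" using phi0_surj by metis
    then have "\<rho> b = \<rho> c" using e Phi_phi0[of b] Phi_phi0[of c] by simp
    then have "\<rho> (b - c) = 0" by (simp add: rho_simps)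
    then have "phi0 (b - c) = 0" by (rule ker_rho)
    then show "x = y" using bc by (simp add: phi0_simps)
  qed
  show "surj Phi"
    unfolding surj_def
  proof
    fix z
    obtain b where "z = \<rho> b" using rho_surj by (metis surjD)
    then have "z = Phi (phi0 b)" using Phi_phi0 by simp
    then show "\<exists>x. z = Phi x" by blast
  qed
qed

lemma Phi_morph: "rep_morph R P Q id id id (\<rho> \<circ> iP) (\<rho> \<circ> iQ) (\<rho> \<circ> iR) Phi"
proof -
  have "Phi p = \<rho> (iP p)" if "p \<in> P" for p using Phi_phi0[of "iP p"] phi0_iP[OF that] by simp
  moreover have "Phi q = \<rho> (iQ q)" if "q \<in> Q" for q using Phi_phi0[of "iQ q"] phi0_iQ[OF that] by simp
  moreover have "Phi r = \<rho> (iR r)" if "r \<in> R" for r using Phi_phi0[of "iR r"] phi0_iR[OF that] by simp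
  ultimately show ?thesis unfolding rep_morph_def using Phi_hom by simp
qed

lemma Phi_graded: "Phi ` G i = \<rho> ` T i"
proof
  show "\<rho> ` T i \<subseteq> Phi ` G i"
  proof
    fix z assume "z \<in> \<rho> ` T i"
    then obtain b where "b \<in> T i" "z = \<rho> b" by blast
    then have "z = Phi (phi0 b)" "phi0 b \<in> G i" using Phi_phi0 phi0_T by auto
    then show "z \<in> Phi ` G i" by blast
  qed
  show "Phi ` G i \<subseteq> \<rho> ` T i"
  proof
    fix z assume "z \<in> Phi ` G i"
    then obtain x where x: "x \<in> G i" "z = Phi x" by blast
    obtain b where b: "phi0 b = x" using phi0_surj by blast
    obtain f where f: "finite {i. f i \<noteq> 0}" "\<forall>i. f i \<in> T i" "b = (\<Sum>i\<in>{i. f i \<noteq> 0}. f i)"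
      using T_decomp by blast
    have "(\<lambda>j. phi0 (f j)) = (\<lambda>j. if j = i then x else 0)"
    proof (rule decomp_unique[of "{j. f j \<noteq> 0}" _ "{i}"])
      show "\<forall>j. phi0 (f j) \<in> G j" using f(2) phi0_T by blast
      show "\<forall>j. j \<notin> {j. f j \<noteq> 0} \<longrightarrow> phi0 (f j) = 0" by (simp add: phi0_simps)
      show "\<forall>j. (if j = i then x else 0) \<in> G j" using x(1) zeroG by auto
      show "sum (\<lambda>j. phi0 (f j)) {j. f j \<noteq> 0} = sum (\<lambda>j. if j = i then x else 0) {i}"
        using b f(3) ring_hom_sum[OF phi0_hom, of f] by simp
    qed (use f(1) in auto)
    then have "phi0 (f i) = x" by (metis (mono_tags))
    then have "z = \<rho> (f i)" using x(2) Phi_phi0[of "f i"] by simp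
    then show "z \<in> \<rho> ` T i" using f(2) by blast
  qed
qed


lemma res_s_unital: "s_unital_system R P Q (\<lambda>a b. a * b)"
proof -
  have 1: "subring R" unfolding subring_def using sg RR by blast
  have 2: "bimodule R P" unfolding bimodule_def using sg RP PR by blast
  have 3: "bimodule R Q" unfolding bimodule_def using sg RQ QR by blast
  have 4: "\<forall>p\<in>P. \<forall>q\<in>Q. p * q \<in> R" using PQ by blast
  have 5: "\<forall>p\<in>P. \<forall>r\<in>R. \<forall>q\<in>Q. (p * r) * q = p * (r * q) \<and> (r * p) * q = r * (p * q) \<and> p * (q * r) = (p * q) * r"
    by (simp add: mult.assoc)
  have "R_system R P Q (\<lambda>a b. a * b)"
    unfolding R_system_def using 1 2 3 4 5 by (simp add: distrib_left distrib_right)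
  moreover have "s_unital_bimod R R R" unfolding s_unital_bimod_def using unitR by blast
  moreover have "s_unital_bimod R P R" unfolding s_unital_bimod_def
  proof
    fix p assume p: "p \<in> P"
    obtain e where e: "e \<in> setprod P Q" "e * p = p" using unitP(1)[OF p] by blast
    obtain b where b: "b \<in> setprod Q P" "p * b = p" using unitP(2)[OF p] by blast
    have "e \<in> R" "b \<in> R" using e(1) b(1) PQ_R QP_R by auto
    then show "(\<exists>a\<in>R. a * p = p) \<and> (\<exists>b\<in>R. p * b = p)" using e(2) b(2) by blast
  qed
  moreover have "s_unital_bimod R Q R" unfolding s_unital_bimod_def
  proof
    fix p assume p: "p \<in> Q"
    obtain e where e: "e \<in> setprod Q P" "e * p = p" using unitQ(1)[OF p] by blast
    obtain b where b: "b \<in> setprod P Q" "p * b = p" using unitQ(2)[OF p] by blast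
    have "e \<in> R" "b \<in> R" using e(1) b(1) PQ_R QP_R by auto
    then show "(\<exists>a\<in>R. a * p = p) \<and> (\<exists>b\<in>R. p * b = p)" using e(2) b(2) by blast
  qed
  ultimately show ?thesis by (simp add: s_unital_system_def)
qed

lemma swap_sum: "(\<Sum>(p,q)\<leftarrow>map (\<lambda>(a,b). (b,a)) l'. (y * q) * p) = (\<Sum>(a,b)\<leftarrow>l'. (y * a) * (b::'a))"
proof (induction l')
  case Nil then show ?case by simp
next
  case (Cons ab l') then show ?case by (cases ab) simp
qed

lemma res_FS_Q:
  assumes "finite Qs" "Qs \<subseteq> Q"
  shows "\<exists>\<Theta>. in_FPQ (\<lambda>a b. a * b) P Q \<Theta> \<and> (\<forall>q\<in>Qs. \<Theta> q = q)"
proof -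
  obtain l where l: "set l \<subseteq> Q \<times> P" "\<forall>q\<in>Qs. (\<Sum>(a,b)\<leftarrow>l. a * (b * q)) = q"
    using FS_Q_list[OF assms] by blast
  have "in_FPQ (\<lambda>a b. a * b) P Q (\<lambda>y. (\<Sum>(a,b)\<leftarrow>l. a * (b * y)))"
    unfolding in_FPQ_iff using l(1) by blast
  then show ?thesis using l(2) by blast
qed

lemma res_FS_P:
  assumes "finite Ps" "Ps \<subseteq> P"
  shows "\<exists>\<Phi>. in_FQP (\<lambda>a b. a * b) P Q \<Phi> \<and> (\<forall>p\<in>Ps. \<Phi> p = p)"
proof -
  obtain l' where l': "set l' \<subseteq> Q \<times> P" "\<forall>p\<in>Ps. (\<Sum>(a,b)\<leftarrow>l'. (p * a) * b) = p"
    using FS_P_list[OF assms] by blast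
  have s: "set (map (\<lambda>(a,b). (b,a)) l') \<subseteq> P \<times> Q" using l'(1) by auto
  have "in_FQP (\<lambda>a b. a * b) P Q (\<lambda>y. (\<Sum>(a,b)\<leftarrow>l'. (y * a) * b))"
  proof -
    have e: "\<forall>y\<in>P. (\<Sum>(a,b)\<leftarrow>l'. (y * a) * b) = (\<Sum>(p,q)\<leftarrow>map (\<lambda>(a,b). (b,a)) l'. (y * q) * p)"
      by (intro ballI) (rule swap_sum[symmetric])
    show ?thesis unfolding in_FQP_def using s e by blast
  qed
  then show ?thesis using l'(2) by blast
qed

lemma res_FS: "condition_FS P Q (\<lambda>a b. a * b)"
  unfolding condition_FS_def using res_FS_Q res_FS_P by blast

lemma res_surj: "surj_cov_rep R P Q (\<lambda>a b. a * b) id id id"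
  unfolding surj_cov_rep_def using cov_id gen_all by simp

lemma span_lclosed:
  assumes "\<And>w. w \<in> W \<Longrightarrow> s * w \<in> W" "x \<in> add_span W"
  shows "s * x \<in> add_span W"
  using assms(2) by induction (auto intro: add_span.intros assms(1) simp: distrib_left)

lemma span_rclosed:
  assumes "\<And>w. w \<in> W \<Longrightarrow> w * s \<in> W" "x \<in> add_span W"
  shows "x * s \<in> add_span W"
  using assms(2) by induction (auto intro: add_span.intros assms(1) simp: distrib_right)

lemma gen_ideal_span:
  assumes "\<And>s w. s \<in> S \<Longrightarrow> w \<in> W \<Longrightarrow> s * w \<in> W \<and> w * s \<in> W"
  shows "gen_ideal S W = add_span W"
proof
  show "gen_ideal S W \<subseteq> add_span W"
  proof
    fix x assume "x \<in> gen_ideal S W"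
    then show "x \<in> add_span W"
    proof induction
      case (base x) then show ?case by (blast intro: add_span.base)
    next
      case zero then show ?case by (blast intro: add_span.zero)
    next
      case (add x y) then show ?case by (blast intro: add_span.add)
    next
      case (neg x) then show ?case by (blast intro: add_span.neg)
    next
      case (lmult s x) then show ?case using span_lclosed[of W s x] assms[of s] by blast
    next
      case (rmult s x) then show ?case using span_rclosed[of W s x] assms[of s] by blast
    qed
  qed
  show "add_span W \<subseteq> gen_ideal S W"
    by (rule add_span_sub) (auto simp: add_subgroup_def intro: gen_ideal.intros)
qed

lemma setprod_span: "setprod (add_span A) (add_span B) = add_span {a * b | a b. a \<in> A \<and> b \<in> B}"
proof
  let ?W = "{a * b | a b. a \<in> A \<and> b \<in> B}"
  have "x * y \<in> add_span ?W" if x: "x \<in> add_span A" and y: "y \<in> add_span B" for x y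
    using x
  proof induction
    case (base a)
    show ?case using y
    proof induction
      case (base b) then show ?case using \<open>a \<in> A\<close> by (auto intro: add_span.base)
    qed (auto intro: add_span.intros simp: distrib_left)
  qed (auto intro: add_span.intros simp: distrib_right)
  then show "setprod (add_span A) (add_span B) \<subseteq> add_span ?W"
    unfolding setprod_def by (intro add_span_sub[OF add_subgroup_add_span]) auto
  show "add_span ?W \<subseteq> setprod (add_span A) (add_span B)"
    unfolding setprod_def by (rule add_span_mono) (auto intro: add_span.base)
qed

lemma setpow_span:
  assumes "add_subgroup X"
  shows "setpow X (Suc m) = add_span {nprod xs | xs. length xs = Suc m \<and> set xs \<subseteq> X}"
proof (induction m)
  case 0
  have "{nprod xs | xs. length xs = Suc 0 \<and> set xs \<subseteq> X} = X"
  proof safe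
    fix xs assume "length xs = Suc 0" "set xs \<subseteq> X"
    then show "nprod xs \<in> X" by (auto simp: length_Suc_conv)
  next
    fix x assume "x \<in> X"
    then show "\<exists>xs. x = nprod xs \<and> length xs = Suc 0 \<and> set xs \<subseteq> X" by (intro exI[of _ "[x]"]) auto
  qed
  then show ?case using add_span_idem_sub[OF assms] by simp
next
  case (Suc m)
  have "setpow X (Suc (Suc m)) = setprod (add_span X) (setpow X (Suc m))"
    using add_span_idem_sub[OF assms] by simp
  also have "\<dots> = add_span {a * b | a b. a \<in> X \<and> b \<in> {nprod xs | xs. length xs = Suc m \<and> set xs \<subseteq> X}}"
    unfolding Suc setprod_span ..
  also have "{a * b | a b. a \<in> X \<and> b \<in> {nprod xs | xs. length xs = Suc m \<and> set xs \<subseteq> X}}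
      = {nprod xs | xs. length xs = Suc (Suc m) \<and> set xs \<subseteq> X}"
  proof (intro set_eqI iffI)
    fix z assume "z \<in> {a * b | a b. a \<in> X \<and> b \<in> {nprod xs | xs. length xs = Suc m \<and> set xs \<subseteq> X}}"
    then obtain a xs where z: "z = a * nprod xs" "a \<in> X" "length xs = Suc m" "set xs \<subseteq> X" by blast
    then have "xs \<noteq> []" by auto
    then have "z = nprod (a # xs)" using z(1) by (simp add: nprod_Cons)
    moreover have "length (a # xs) = Suc (Suc m)" "set (a # xs) \<subseteq> X" using z by auto
    ultimately show "z \<in> {nprod xs | xs. length xs = Suc (Suc m) \<and> set xs \<subseteq> X}" by blast
  next
    fix z assume "z \<in> {nprod xs | xs. length xs = Suc (Suc m) \<and> set xs \<subseteq> X}"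
    then obtain ys where ys: "z = nprod ys" "length ys = Suc (Suc m)" "set ys \<subseteq> X" by blast
    then obtain a xs where e: "ys = a # xs" by (cases ys) auto
    then have "xs \<noteq> []" "length xs = Suc m" "set xs \<subseteq> X" "a \<in> X" using ys by auto
    moreover have "z = a * nprod xs" using ys(1) e calculation(1) by (simp add: nprod_Cons)
    ultimately show "z \<in> {a * b | a b. a \<in> X \<and> b \<in> {nprod xs | xs. length xs = Suc m \<and> set xs \<subseteq> X}}" by blast
  qed
  finally show ?case .
qed

lemma psi_list_eq:
  "length ps = length qs \<Longrightarrow> ps \<noteq> [] \<Longrightarrow> psi_list (\<lambda>a b. a * b) ps qs = nprod ps * nprod (rev qs)"
proof (induction ps arbitrary: qs)
  case Nil then show ?case by simp
next
  case (Cons p ps)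
  then obtain q qs' where q: "qs = q # qs'" by (cases qs) auto
  show ?case
  proof (cases "ps = []")
    case True then show ?thesis using Cons q by simp
  next
    case False
    then obtain p' ps'' where ps: "ps = p' # ps''" by (cases ps) auto
    obtain q' qs'' where qs': "qs' = q' # qs''" using Cons.prems q ps by (cases qs') auto
    have IH: "psi_list (\<lambda>a b. a * b) ps qs' = nprod ps * nprod (rev qs')"
      using Cons.IH[of qs'] Cons.prems q False by simp
    have e1: "nprod (rev qs) = nprod (rev qs') * q" using q qs' nprod_snoc[of "rev qs'" q] by simp
    have e2: "nprod (p # ps) = p * nprod ps" using ps by simp
    have e3: "psi_list (\<lambda>a b. a * b) (p # ps) qs = p * psi_list (\<lambda>a b. a * b) ps qs' * q"
      using ps qs' q by simp
    show ?thesis unfolding e1 e2 e3 IH by (simp add: mult.assoc)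
  qed
qed

lemma nprod_lmul: "s * nprod (p # ps) = nprod ((s * p) # ps)"
  by (cases ps) (auto simp: mult.assoc)

lemma nprod_rmul: "nprod (qs @ [q]) * s = nprod (qs @ [q * s])"
  by (cases "qs = []") (auto simp: nprod_snoc mult.assoc)

lemma res_semi_full: "semi_full R P Q (\<lambda>a b. a * b) id id id G"
  unfolding semi_full_def
proof (intro conjI allI)
  show "graded_cov_rep R P Q (\<lambda>a b. a * b) id id id G"
    unfolding graded_cov_rep_def using res_surj ZG by simp
  fix k :: nat
  show "setprod (G (- int k)) (G (int k)) = I_ideal R P Q (\<lambda>a b. a * b) id G k"
  proof (cases k)
    case 0
    have W: "psi_vals R P Q (\<lambda>a b. a * b) 0 = {x * y | x y. x \<in> R \<and> y \<in> R}" by (simp add: psi_vals_def)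
    have "gen_ideal R {x * y | x y. x \<in> R \<and> y \<in> R} = add_span {x * y | x y. x \<in> R \<and> y \<in> R}"
    proof (rule gen_ideal_span)
      fix s w assume s: "s \<in> R" and "w \<in> {x * y | x y. x \<in> R \<and> y \<in> R}"
      then obtain x y where w: "w = x * y" "x \<in> R" "y \<in> R" by blast
      have "s * w = (s * x) * y" "w * s = x * (y * s)" using w(1) by (simp_all add: mult.assoc)
      then show "s * w \<in> {x * y | x y. x \<in> R \<and> y \<in> R} \<and> w * s \<in> {x * y | x y. x \<in> R \<and> y \<in> R}"
        using RR[OF s w(2)] RR[OF w(3) s] w by blast
    qed
    then show ?thesis using 0 W by (simp add: I_ideal_def setprod_def)
  next
    case (Suc m)
    let ?W = "{nprod ps * nprod qs | ps qs. length ps = k \<and> length qs = k \<and> set ps \<subseteq> P \<and> set qs \<subseteq> Q}"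
    have k0: "k > 0" using Suc by simp
    have "G (- int k) = setpow P k" using SS k0 unfolding semi_saturated_def by blast
    also have "\<dots> = add_span {nprod xs | xs. length xs = k \<and> set xs \<subseteq> P}"
      using setpow_span[OF sg, of "-1" m] unfolding Suc[symmetric] .
    finally have GP: "G (- int k) = add_span {nprod xs | xs. length xs = k \<and> set xs \<subseteq> P}" .
    have "G (int k) = setpow Q k" using SS k0 unfolding semi_saturated_def by blast
    also have "\<dots> = add_span {nprod xs | xs. length xs = k \<and> set xs \<subseteq> Q}"
      using setpow_span[OF sg, of 1 m] unfolding Suc[symmetric] .
    finally have GQ: "G (int k) = add_span {nprod xs | xs. length xs = k \<and> set xs \<subseteq> Q}" .
    have L: "setprod (G (- int k)) (G (int k)) = add_span ?W"
      unfolding GP GQ setprod_span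
    proof (rule arg_cong[where f=add_span], intro set_eqI iffI)
      fix z assume "z \<in> {a * b | a b. a \<in> {nprod xs | xs. length xs = k \<and> set xs \<subseteq> P} \<and> b \<in> {nprod xs | xs. length xs = k \<and> set xs \<subseteq> Q}}"
      then show "z \<in> ?W" by blast
    next
      fix z assume "z \<in> ?W"
      then show "z \<in> {a * b | a b. a \<in> {nprod xs | xs. length xs = k \<and> set xs \<subseteq> P} \<and> b \<in> {nprod xs | xs. length xs = k \<and> set xs \<subseteq> Q}}" by blast
    qed
    have PV: "psi_vals R P Q (\<lambda>a b. a * b) k = ?W"
    proof -
      have "psi_vals R P Q (\<lambda>a b. a * b) k = {psi_list (\<lambda>a b. a * b) ps qs | ps qs. length ps = k \<and> length qs = k \<and> set ps \<subseteq> P \<and> set qs \<subseteq> Q}"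
        using Suc by (simp add: psi_vals_def)
      also have "\<dots> = ?W"
      proof (intro set_eqI iffI)
        fix z assume "z \<in> {psi_list (\<lambda>a b. a * b) ps qs | ps qs. length ps = k \<and> length qs = k \<and> set ps \<subseteq> P \<and> set qs \<subseteq> Q}"
        then obtain ps qs where a: "z = psi_list (\<lambda>a b. a * b) ps qs" "length ps = k" "length qs = k" "set ps \<subseteq> P" "set qs \<subseteq> Q"
          by blast
        have "ps \<noteq> []" using a Suc by auto
        then have "z = nprod ps * nprod (rev qs)" using psi_list_eq[of ps qs] a by simp
        moreover have "length (rev qs) = k" "set (rev qs) \<subseteq> Q" using a by auto
        ultimately show "z \<in> ?W" using a by blast
      next
        fix z assume "z \<in> ?W"
        then obtain ps qs where a: "z = nprod ps * nprod qs" "length ps = k" "length qs = k" "set ps \<subseteq> P" "set qs \<subseteq> Q"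
          by blast
        have "ps \<noteq> []" using a Suc by auto
        then have "z = psi_list (\<lambda>a b. a * b) ps (rev qs)" using psi_list_eq[of ps "rev qs"] a by simp
        moreover have "length (rev qs) = k" "set (rev qs) \<subseteq> Q" using a by auto
        ultimately show "z \<in> {psi_list (\<lambda>a b. a * b) ps qs | ps qs. length ps = k \<and> length qs = k \<and> set ps \<subseteq> P \<and> set qs \<subseteq> Q}"
          using a by blast
      qed
      finally show ?thesis .
    qed
    have cl: "s * w \<in> ?W \<and> w * s \<in> ?W" if s: "s \<in> R" and w: "w \<in> ?W" for s w
    proof
      obtain ps qs where a: "w = nprod ps * nprod qs" "length ps = k" "length qs = k" "set ps \<subseteq> P" "set qs \<subseteq> Q"
        using w by blast
      obtain p ps' where ps: "ps = p # ps'" using a(2) Suc by (cases ps) auto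
      obtain qs' q where qs: "qs = qs' @ [q]" using a(3) Suc by (cases qs rule: rev_exhaust) auto
      have "s * w = (s * nprod (p # ps')) * nprod qs" using a(1) ps by (simp add: mult.assoc)
      then have "s * w = nprod ((s * p) # ps') * nprod qs" unfolding nprod_lmul .
      moreover have "(s * p) # ps' \<in> {xs. length xs = k \<and> set xs \<subseteq> P}" using a ps RP s by auto
      ultimately show "s * w \<in> ?W" using a by blast
      have "w * s = nprod ps * (nprod (qs' @ [q]) * s)" using a(1) qs by (simp add: mult.assoc)
      then have "w * s = nprod ps * nprod (qs' @ [q * s])" unfolding nprod_rmul .
      moreover have "qs' @ [q * s] \<in> {xs. length xs = k \<and> set xs \<subseteq> Q}" using a qs QR s by auto
      ultimately show "w * s \<in> ?W" using a by blast
    qed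
    have "I_ideal R P Q (\<lambda>a b. a * b) id G k = add_span ?W"
      unfolding I_ideal_def image_id id_apply PV by (rule gen_ideal_span) (use cl in blast)
    then show ?thesis using L by simp
  qed
qed

end

theorem mainTheorem14:
  fixes G :: "int \<Rightarrow> 'a::ring set"
    and iP iQ iR :: "'a \<Rightarrow> 'b::ring"
    and \<rho> :: "'b \<Rightarrow> 'c::ring"
  assumes preCP: "pre_CP G"
    and toep: "toeplitz_rep (G 0) (G (-1)) (G 1) (\<lambda>a b. a * b) iP iQ iR"
    and univ_a: "universal_for (G 0) (G (-1)) (G 1) (\<lambda>a b. a * b) iP iQ iR TYPE('a)"
    and univ_b: "universal_for (G 0) (G (-1)) (G 1) (\<lambda>a b. a * b) iP iQ iR TYPE('b)"
    and univ_c: "universal_for (G 0) (G (-1)) (G 1) (\<lambda>a b. a * b) iP iQ iR TYPE('c)"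
    and rho_hom: "ring_hom \<rho>" and rho_surj: "surj \<rho>"
    and rho_ker: "{x. \<rho> x = 0} = toeplitz_ideal (G 0) (G (-1)) (G 1) (\<lambda>a b. a * b) iP iQ iR
                                   (CP_ideal (G 0) (G (-1)) (G 1) (\<lambda>a b. a * b))"
  shows "s_unital_system (G 0) (G (-1)) (G 1) (\<lambda>a b. a * b)
       \<and> condition_FS (G (-1)) (G 1) (\<lambda>a b. a * b)
       \<and> CP_well_defined (G 0) (G (-1)) (G 1) (\<lambda>a b. a * b)
       \<and> surj_cov_rep (G 0) (G (-1)) (G 1) (\<lambda>a b. a * b) id id id
       \<and> rep_iso (G 0) (G (-1)) (G 1) id id id (\<rho> \<circ> iP) (\<rho> \<circ> iQ) (\<rho> \<circ> iR)
       \<and> graded_iso G (\<lambda>i. \<rho> ` toeplitz_grading (G 0) (G (-1)) (G 1) iP iQ iR i)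
       \<and> semi_full (G 0) (G (-1)) (G 1) (\<lambda>a b. a * b) id id id G"
proof -
  interpret cpsetup G iP iQ iR \<rho>
    using preCP toep univ_a rho_hom rho_surj rho_ker by unfold_locales
  have "rep_iso (G 0) (G (-1)) (G 1) id id id (\<rho> \<circ> iP) (\<rho> \<circ> iQ) (\<rho> \<circ> iR)"
    unfolding rep_iso_def using Phi_morph Phi_bij by blast
  moreover have "graded_iso G (\<lambda>i. \<rho> ` toeplitz_grading (G 0) (G (-1)) (G 1) iP iQ iR i)"
    unfolding graded_iso_def using Phi_hom Phi_bij Phi_graded by blast
  ultimately show ?thesis using res_s_unital res_FS CP_wd res_surj res_semi_full by blast
qed

end
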